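(* Under Assumption (A), there exist a constant $B<\infty$ and an integer $N$ such that for all $n\ge N$ and every state $x=(A,\mu,\theta_1,\dots,\theta_n)\in\mathcal X$, $$\mathbb E\big[f(X^{(k+1)})\mid X^{(k)}=x\big]\le\left(\frac{V^2+2VA}{V^2+2VA+A^2}\right)^2 f(x)+B .$$
   Context: Fix $V>0$, $a>0$, $b_0>0$. For each $n\ge2$ observed data $Y_1,\dots,Y_n\in\mathbb R$ are given; $\bar Y=\frac1n\sum_iY_i$, $\Delta=\Delta_n=\sum_{i=1}^n(Y_i-\bar Y)^2$. Model: $Y_i\mid\theta_i\sim\mathcal N(\theta_i,V)$, $\theta_i\mid\mu,A\sim\mathcal N(\mu,A)$ independently ($1\le i\le n$), flat prior on $\mu\in\mathbb R$, $A\sim\mathrm{IG}(a,b_0)$ (density $\propto A^{-a-1}e^{-b_0/A}$ on $(0,\infty)$). The posterior $\pi$ on $\mathcal X=(0,\infty)\times\mathbb R\times\mathbb R^n$, $x=(A,\mu,\theta_1,\dots,\theta_n)$, has density $\propto A^{-a-1}e^{-b_0/A}\prod_{i=1}^n A^{-1/2}e^{-(\theta_i-\mu)^2/(2A)}e^{-(Y_i-\theta_i)^2/(2V)}$. Write $\bar\theta=\frac1n\sum_i\theta_i$. The Gibbs sampler $X^{(k)}=(A^{(k)},\mu^{(k)},\theta^{(k)}_1,\dots,\theta^{(k)}_n)$ updates: $\mu^{(k+1)}\sim\mathcal N(\bar\theta^{(k)},A^{(k)}/n)$; then independently $\theta_i^{(k+1)}\sim\mathcal N\big(\frac{\mu^{(k+1)}V+Y_iA^{(k)}}{V+A^{(k)}},\frac{A^{(k)}V}{V+A^{(k)}}\big)$,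 $i=1,\dots,n$; then $A^{(k+1)}\sim\mathrm{IG}\big(a+\frac{n-1}2,\ b_0+\frac12\sum_i(\theta_i^{(k+1)}-\bar\theta^{(k+1)})^2\big)$. Assumption (A): there are $\delta>0$, $M<\infty$ and an integer $N_0$ with $\frac{\Delta_n}{n-1}\le M$ for all $n$ and $\frac{\Delta_n}{n-1}\ge V+\delta$ for all $n\ge N_0$. Drift function: $f(x)=n(\bar\theta-\bar Y)^2+n\big[\big(\frac{\Delta}{n-1}-V\big)-A\big]^2$. *)

theory Defs
  imports "HOL-Probability.Probability"
begin

text \<open>Data: for each sample size n, observations Y n i for i < n (indices 0..n-1).\<close>

definition Ybar :: "(nat \<Rightarrow> nat \<Rightarrow> real) \<Rightarrow> nat \<Rightarrow> real" where
  "Ybar Y n = (\<Sum>i<n. Y n i) / real n"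

definition Delta :: "(nat \<Rightarrow> nat \<Rightarrow> real) \<Rightarrow> nat \<Rightarrow> real" where
  "Delta Y n = (\<Sum>i<n. (Y n i - Ybar Y n)\<^sup>2)"

definition theta_bar :: "nat \<Rightarrow> (nat \<Rightarrow> real) \<Rightarrow> real" where
  "theta_bar n \<theta> = (\<Sum>i<n. \<theta> i) / real n"

definition normal_M :: "real \<Rightarrow> real \<Rightarrow> real measure" where
  "normal_M m v = density lborel (\<lambda>x. ennreal (normal_density m (sqrt v) x))"

definition inv_gamma_density :: "real \<Rightarrow> real \<Rightarrow> real \<Rightarrow> real" where
  "inv_gamma_density \<alpha> \<beta> x =
     (if 0 < x then \<beta> powr \<alpha> / Gamma \<alpha> * x powr (- \<alpha> - 1) * exp (- \<beta> / x) else 0)"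

definition inv_gamma_M :: "real \<Rightarrow> real \<Rightarrow> real measure" where
  "inv_gamma_M \<alpha> \<beta> = density lborel (\<lambda>x. ennreal (inv_gamma_density \<alpha> \<beta> x))"

definition drift_f :: "(nat \<Rightarrow> nat \<Rightarrow> real) \<Rightarrow> real \<Rightarrow> nat \<Rightarrow> real \<Rightarrow> (nat \<Rightarrow> real) \<Rightarrow> real" where
  "drift_f Y V n A \<theta> =
     real n * (theta_bar n \<theta> - Ybar Y n)\<^sup>2
     + real n * ((Delta Y n / (real n - 1) - V) - A)\<^sup>2"

text \<open>E[g(X^(k+1)) | X^(k) = (A, mu, theta)] for nonnegative g, following the Gibbs update order
  mu, then theta (independently), then A.  (The conditional law does not depend on mu.)\<close>
definition gibbs_expect ::
  "(nat \<Rightarrow> nat \<Rightarrow> real) \<Rightarrow> real \<Rightarrow> real \<Rightarrow> real \<Rightarrow> nat \<Rightarrow>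
   (real \<Rightarrow> real \<Rightarrow> (nat \<Rightarrow> real) \<Rightarrow> real) \<Rightarrow> real \<Rightarrow> real \<Rightarrow> (nat \<Rightarrow> real) \<Rightarrow> ennreal" where
  "gibbs_expect Y V a b0 n g A \<mu> \<theta> =
     (\<integral>\<^sup>+ \<mu>'. (\<integral>\<^sup>+ \<theta>'. (\<integral>\<^sup>+ A'. ennreal (g A' \<mu>' \<theta>')
        \<partial>inv_gamma_M (a + (real n - 1) / 2)
                      (b0 + (1/2) * (\<Sum>i<n. (\<theta>' i - theta_bar n \<theta>')\<^sup>2)))
      \<partial>(PiM {..<n} (\<lambda>i. normal_M ((\<mu>' * V + Y n i * A) / (V + A)) (A * V / (V + A)))))
    \<partial>normal_M (theta_bar n \<theta>) (A / real n))"

end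

theory Submission
  imports Defs
begin


lemma nn_integral_inv_subst:
  fixes f :: "real \<Rightarrow> real" and \<beta> :: real
  assumes fm[measurable]: "f \<in> borel_measurable borel" and fnn: "\<And>x. x > 0 \<Longrightarrow> f x \<ge> 0"
    and b: "\<beta> > 0"
  shows "(\<integral>\<^sup>+x. ennreal (f x * indicator {0<..} x) \<partial>lborel)
       = (\<integral>\<^sup>+t. ennreal (f (\<beta> / t) * (\<beta> / t\<^sup>2) * indicator {0<..} t) \<partial>lborel)"
proof -
  define L where "L k = 1 / (real k + 2)" for k :: nat
  define U where "U k = real k + 2" for k :: nat
  have Lpos: "L k > 0" for k unfolding L_def by auto
  have LU: "L k \<le> U k" for k unfolding L_def U_def by (simp add: field_simps)
  have step: "(\<integral>\<^sup>+x. ennreal (f x * indicator {\<beta> / U k..\<beta> / L k} x) \<partial>lborel)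
       = (\<integral>\<^sup>+t. ennreal (f (\<beta> / t) * (\<beta> / t\<^sup>2) * indicator {L k..U k} t) \<partial>lborel)" for k
  proof -
    have "(\<integral>\<^sup>+x. ennreal (f x * indicator {\<beta> / U k..\<beta> / L k} x) \<partial>lborel)
        = (\<integral>\<^sup>+x. ennreal (f x * indicator {\<beta> / U k..\<beta> / L k} x) \<partial>distr lborel borel uminus)"
      by (simp add: lborel_distr_uminus)
    also have "\<dots> = (\<integral>\<^sup>+y. ennreal (f (- y) * indicator {\<beta> / U k..\<beta> / L k} (- y)) \<partial>lborel)"
      by (subst nn_integral_distr) auto
    also have "\<dots> = (\<integral>\<^sup>+y. ennreal ((\<lambda>y. f (- y)) y * indicator {(\<lambda>t. - \<beta> / t) (L k)..(\<lambda>t. - \<beta> / t) (U k)} y) \<partial>lborel)"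
      by (intro nn_integral_cong) (auto simp: indicator_def)
    also have "\<dots> = (\<integral>\<^sup>+t. ennreal ((\<lambda>y. f (- y)) ((\<lambda>t. - \<beta> / t) t) * (\<beta> / t\<^sup>2) * indicator {L k..U k} t) \<partial>lborel)"
    proof (rule nn_integral_substitution)
      show "set_borel_measurable borel {- \<beta> / L k..- \<beta> / U k} (\<lambda>y. f (- y))"
        unfolding set_borel_measurable_def by measurable
      show "((\<lambda>t. - \<beta> / t) has_real_derivative \<beta> / x\<^sup>2) (at x)" if "x \<in> {L k..U k}" for x
      proof -
        have "x > 0" using that Lpos[of k] by auto
        then show ?thesis
          by (auto intro!: derivative_eq_intros simp: power2_eq_square field_simps)
      qed
      show "continuous_on {L k..U k} (\<lambda>x. \<beta> / x\<^sup>2)"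
        using Lpos[of k] by (intro continuous_intros) auto
      show "\<And>x. x \<in> {L k..U k} \<Longrightarrow> 0 \<le> \<beta> / x\<^sup>2" using b by auto
      show "L k \<le> U k" by (rule LU)
    qed
    also have "\<dots> = (\<integral>\<^sup>+t. ennreal (f (\<beta> / t) * (\<beta> / t\<^sup>2) * indicator {L k..U k} t) \<partial>lborel)"
      by simp
    finally show ?thesis .
  qed
  have Uk: "U k \<le> U (Suc k)" "L (Suc k) \<le> L k" for k
  proof -
    show "U k \<le> U (Suc k)" unfolding U_def by simp
    show "L (Suc k) \<le> L k" unfolding L_def by (intro divide_left_mono) auto
  qed
  have Upos: "U k > 0" for k unfolding U_def by simp
  have mono1: "incseq (\<lambda>k x. ennreal (f x * indicator {\<beta> / U k..\<beta> / L k} x))"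
  proof (intro incseq_SucI le_funI)
    fix k x
    have h1: "\<beta> / U (Suc k) \<le> \<beta> / U k"
      using b Upos[of k] Uk(1)[of k] by (intro divide_left_mono) auto
    have h2: "\<beta> / L k \<le> \<beta> / L (Suc k)"
      using b Lpos[of "Suc k"] Uk(2)[of k] by (intro divide_left_mono) auto
    show "ennreal (f x * indicator {\<beta> / U k..\<beta> / L k} x) \<le> ennreal (f x * indicator {\<beta> / U (Suc k)..\<beta> / L (Suc k)} x)"
    proof (cases "x \<in> {\<beta> / U k..\<beta> / L k}")
      case True
      then have "x \<in> {\<beta> / U (Suc k)..\<beta> / L (Suc k)}" using h1 h2 by simp
      with True show ?thesis by simp
    next
      case False
      then show ?thesis by simp
    qed
  qed
  have mono2: "incseq (\<lambda>k t. ennreal (f (\<beta> / t) * (\<beta> / t\<^sup>2) * indicator {L k..U k} t))"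
  proof (intro incseq_SucI le_funI)
    fix k t
    show "ennreal (f (\<beta> / t) * (\<beta> / t\<^sup>2) * indicator {L k..U k} t) \<le> ennreal (f (\<beta> / t) * (\<beta> / t\<^sup>2) * indicator {L (Suc k)..U (Suc k)} t)"
    proof (cases "t \<in> {L k..U k}")
      case True
      then have "t \<in> {L (Suc k)..U (Suc k)}" using Uk[of k] by simp
      with True show ?thesis by simp
    next
      case False
      then show ?thesis by simp
    qed
  qed
  have ex: "\<exists>k. L k \<le> t \<and> t \<le> U k" if "t > 0" for t
  proof -
    obtain k1 :: nat where k1: "real k1 > t" using reals_Archimedean2 by blast
    obtain k2 :: nat where k2: "real k2 > 1 / t" using reals_Archimedean2 by blast
    let ?k = "k1 + k2"
    have "U ?k \<ge> t" using k1 by (simp add: U_def)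
    moreover have "L ?k \<le> t"
    proof -
      have "1 / t < real ?k + 2" using k2 by simp
      then have "1 < (real ?k + 2) * t" using that by (simp add: field_simps)
      then show ?thesis using that by (simp add: L_def field_simps)
    qed
    ultimately show ?thesis by blast
  qed
  have sup1: "(SUP k. ennreal (f x * indicator {\<beta> / U k..\<beta> / L k} x)) = ennreal (f x * indicator {0<..} x)" for x
  proof (rule antisym)
    show "(SUP k. ennreal (f x * indicator {\<beta> / U k..\<beta> / L k} x)) \<le> ennreal (f x * indicator {0<..} x)"
    proof (rule SUP_least)
      fix k
      show "ennreal (f x * indicator {\<beta> / U k..\<beta> / L k} x) \<le> ennreal (f x * indicator {0<..} x)"
      proof (cases "x \<in> {\<beta> / U k..\<beta> / L k}")
        case True
        have "\<beta> / U k > 0" using b Upos[of k] by simp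
        then have "x > 0" using True by auto
        with True show ?thesis by simp
      qed simp
    qed
  next
    show "ennreal (f x * indicator {0<..} x) \<le> (SUP k. ennreal (f x * indicator {\<beta> / U k..\<beta> / L k} x))"
    proof (cases "x > 0")
      case True
      then obtain k where k: "L k \<le> \<beta> / x" "\<beta> / x \<le> U k" using ex[of "\<beta> / x"] b by auto
      have "\<beta> / U k \<le> x" using k(2) True Upos[of k]
        by (simp add: divide_le_eq mult.commute)
      moreover have "x \<le> \<beta> / L k" using k(1) True Lpos[of k]
        by (simp add: le_divide_eq mult.commute)
      ultimately have "ennreal (f x * indicator {0<..} x) = ennreal (f x * indicator {\<beta> / U k..\<beta> / L k} x)"
        using True by (auto simp: indicator_def)
      also have "\<dots> \<le> (SUP k. ennreal (f x * indicator {\<beta> / U k..\<beta> / L k} x))"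
        by (rule SUP_upper) simp
      finally show ?thesis .
    qed auto
  qed
  have sup2: "(SUP k. ennreal (f (\<beta> / t) * (\<beta> / t\<^sup>2) * indicator {L k..U k} t)) = ennreal (f (\<beta> / t) * (\<beta> / t\<^sup>2) * indicator {0<..} t)" for t
  proof (rule antisym)
    show "(SUP k. ennreal (f (\<beta> / t) * (\<beta> / t\<^sup>2) * indicator {L k..U k} t)) \<le> ennreal (f (\<beta> / t) * (\<beta> / t\<^sup>2) * indicator {0<..} t)"
    proof (rule SUP_least)
      fix k
      show "ennreal (f (\<beta> / t) * (\<beta> / t\<^sup>2) * indicator {L k..U k} t) \<le> ennreal (f (\<beta> / t) * (\<beta> / t\<^sup>2) * indicator {0<..} t)"
      proof (cases "t \<in> {L k..U k}")
        case True
        then have "t > 0" using Lpos[of k] by auto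
        with True show ?thesis by simp
      qed simp
    qed
  next
    show "ennreal (f (\<beta> / t) * (\<beta> / t\<^sup>2) * indicator {0<..} t) \<le> (SUP k. ennreal (f (\<beta> / t) * (\<beta> / t\<^sup>2) * indicator {L k..U k} t))"
    proof (cases "t > 0")
      case True
      then obtain k where k: "L k \<le> t" "t \<le> U k" using ex by auto
      then have "ennreal (f (\<beta> / t) * (\<beta> / t\<^sup>2) * indicator {0<..} t) = ennreal (f (\<beta> / t) * (\<beta> / t\<^sup>2) * indicator {L k..U k} t)"
        using True by (auto simp: indicator_def)
      also have "\<dots> \<le> (SUP k. ennreal (f (\<beta> / t) * (\<beta> / t\<^sup>2) * indicator {L k..U k} t))"
        by (rule SUP_upper) simp
      finally show ?thesis .
    qed auto
  qed
  have "(\<integral>\<^sup>+x. ennreal (f x * indicator {0<..} x) \<partial>lborel)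
      = (\<integral>\<^sup>+x. (SUP k. ennreal (f x * indicator {\<beta> / U k..\<beta> / L k} x)) \<partial>lborel)"
    by (intro nn_integral_cong sup1[symmetric])
  also have "\<dots> = (SUP k. \<integral>\<^sup>+x. ennreal (f x * indicator {\<beta> / U k..\<beta> / L k} x) \<partial>lborel)"
    by (rule nn_integral_monotone_convergence_SUP[OF mono1]) measurable
  also have "\<dots> = (SUP k. \<integral>\<^sup>+t. ennreal (f (\<beta> / t) * (\<beta> / t\<^sup>2) * indicator {L k..U k} t) \<partial>lborel)"
    by (simp add: step)
  also have "\<dots> = (\<integral>\<^sup>+t. (SUP k. ennreal (f (\<beta> / t) * (\<beta> / t\<^sup>2) * indicator {L k..U k} t)) \<partial>lborel)"
    by (rule nn_integral_monotone_convergence_SUP[OF mono2, symmetric]) measurable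
  also have "\<dots> = (\<integral>\<^sup>+t. ennreal (f (\<beta> / t) * (\<beta> / t\<^sup>2) * indicator {0<..} t) \<partial>lborel)"
    by (intro nn_integral_cong sup2)
  finally show ?thesis .
qed



lemma ig_moment_nn:
  fixes \<alpha> \<beta> :: real and j :: nat
  assumes a: "\<alpha> > real j" and b: "\<beta> > 0"
  shows "(\<integral>\<^sup>+x. ennreal (inv_gamma_density \<alpha> \<beta> x * x ^ j) \<partial>lborel)
       = ennreal (\<beta> ^ j * Gamma (\<alpha> - real j) / Gamma \<alpha>)"
proof -
  have apos: "\<alpha> > 0" using a by linarith
  have Gpos: "Gamma \<alpha> > 0" using apos by simp
  define f where "f x = \<beta> powr \<alpha> / Gamma \<alpha> * x powr (- \<alpha> - 1) * exp (- \<beta> / x) * x ^ j" for x :: real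
  have fm: "f \<in> borel_measurable borel" unfolding f_def by measurable
  have fnn: "f x \<ge> 0" if "x > 0" for x
    unfolding f_def using that Gpos by (intro mult_nonneg_nonneg divide_nonneg_pos) auto
  have eq1: "inv_gamma_density \<alpha> \<beta> x * x ^ j = f x * indicator {0<..} x" for x
    unfolding f_def inv_gamma_density_def by (auto simp: indicator_def)
  have eq2: "f (\<beta> / t) * (\<beta> / t\<^sup>2) * indicator {0<..} t
      = \<beta> ^ j / Gamma \<alpha> * (indicator {0..} t * t powr (\<alpha> - real j - 1) / exp t)" for t
  proof (cases "t > 0")
    case True
    have e1: "(\<beta> / t) powr (- \<alpha> - 1) = \<beta> powr (- \<alpha> - 1) * t powr (\<alpha> + 1)"
    proof -
      have m: "- \<alpha> - 1 = - (\<alpha> + 1)" by simp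
      have "(\<beta> / t) powr (- \<alpha> - 1) = \<beta> powr (- \<alpha> - 1) / t powr (- \<alpha> - 1)"
        using True b by (simp add: powr_divide)
      also have "t powr (- \<alpha> - 1) = inverse (t powr (\<alpha> + 1))"
        unfolding m by (rule powr_minus)
      finally show ?thesis by (simp add: divide_inverse)
    qed
    have e2: "(\<beta> / t) ^ j = \<beta> ^ j / t powr real j"
      using True by (simp add: power_divide powr_realpow)
    have e3: "t powr (\<alpha> + 1) / t powr real j / t\<^sup>2 = t powr (\<alpha> - real j - 1)"
    proof -
      have s: "t\<^sup>2 = t powr 2" using True by (simp add: powr_realpow)
      have "t powr (\<alpha> - real j - 1) = t powr ((\<alpha> + 1 - real j) - 2)" by (simp add: algebra_simps)
      also have "\<dots> = t powr (\<alpha> + 1) / t powr real j / t powr 2"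
        by (simp only: powr_diff)
      finally show ?thesis unfolding s by simp
    qed
    have e4: "\<beta> powr \<alpha> * \<beta> powr (- \<alpha> - 1) * \<beta> = 1"
      using b by (simp add: powr_add[symmetric])
    have e5: "exp (- \<beta> / (\<beta> / t)) = 1 / exp t" using b True by (simp add: exp_minus field_simps)
    have "f (\<beta> / t) * (\<beta> / t\<^sup>2) = \<beta> powr \<alpha> / Gamma \<alpha> * (\<beta> powr (- \<alpha> - 1) * t powr (\<alpha> + 1)) * (1 / exp t) * (\<beta> ^ j / t powr real j) * (\<beta> / t\<^sup>2)"
      unfolding f_def e1 e2 e5 by simp
    also have "\<dots> = (\<beta> powr \<alpha> * \<beta> powr (- \<alpha> - 1) * \<beta>) * \<beta> ^ j / Gamma \<alpha> * (t powr (\<alpha> + 1) / t powr real j / t\<^sup>2) / exp t"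
      by (simp add: field_simps)
    also have "\<dots> = \<beta> ^ j / Gamma \<alpha> * (t powr (\<alpha> - real j - 1) / exp t)"
      unfolding e3 e4 by simp
    finally show ?thesis using True by (simp add: indicator_def)
  qed (auto simp: indicator_def)
  have "(\<integral>\<^sup>+x. ennreal (inv_gamma_density \<alpha> \<beta> x * x ^ j) \<partial>lborel)
      = (\<integral>\<^sup>+x. ennreal (f x * indicator {0<..} x) \<partial>lborel)"
    by (simp add: eq1)
  also have "\<dots> = (\<integral>\<^sup>+t. ennreal (f (\<beta> / t) * (\<beta> / t\<^sup>2) * indicator {0<..} t) \<partial>lborel)"
    by (rule nn_integral_inv_subst[OF fm fnn b])
  also have "\<dots> = (\<integral>\<^sup>+t. ennreal (\<beta> ^ j / Gamma \<alpha>) * ennreal (indicator {0..} t * t powr (\<alpha> - real j - 1) / exp t) \<partial>lborel)"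
  proof (intro nn_integral_cong)
    fix t :: real
    have "0 \<le> indicator {0..} t * t powr (\<alpha> - real j - 1) / exp t" by simp
    moreover have "0 \<le> \<beta> ^ j / Gamma \<alpha>" using b Gpos by simp
    ultimately show "ennreal (f (\<beta> / t) * (\<beta> / t\<^sup>2) * indicator {0<..} t) = ennreal (\<beta> ^ j / Gamma \<alpha>) * ennreal (indicator {0..} t * t powr (\<alpha> - real j - 1) / exp t)"
      unfolding eq2 by (simp only: ennreal_mult[symmetric])
  qed
  also have "\<dots> = ennreal (\<beta> ^ j / Gamma \<alpha>) * (\<integral>\<^sup>+t. ennreal (indicator {0..} t * t powr (\<alpha> - real j - 1) / exp t) \<partial>lborel)"
    by (rule nn_integral_cmult) measurable
  also have "\<dots> = ennreal (\<beta> ^ j / Gamma \<alpha>) * ennreal (Gamma (\<alpha> - real j))"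
    using a by (subst Gamma_conv_nn_integral_real) auto
  also have "\<dots> = ennreal (\<beta> ^ j * Gamma (\<alpha> - real j) / Gamma \<alpha>)"
    using b Gpos a by (subst ennreal_mult[symmetric]) auto
  finally show ?thesis .
qed

lemma ig_moment:
  fixes \<alpha> \<beta> :: real and j :: nat
  assumes a: "\<alpha> > real j" and b: "\<beta> > 0"
  shows "has_bochner_integral lborel (\<lambda>x. inv_gamma_density \<alpha> \<beta> x * x ^ j) (\<beta> ^ j * Gamma (\<alpha> - real j) / Gamma \<alpha>)"
proof (rule has_bochner_integral_nn_integral)
  show "(\<lambda>x. inv_gamma_density \<alpha> \<beta> x * x ^ j) \<in> borel_measurable lborel"
    unfolding inv_gamma_density_def by measurable
  show "AE x in lborel. 0 \<le> inv_gamma_density \<alpha> \<beta> x * x ^ j"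
    using b a by (intro AE_I2) (auto simp: inv_gamma_density_def intro!: mult_nonneg_nonneg)
  show "0 \<le> \<beta> ^ j * Gamma (\<alpha> - real j) / Gamma \<alpha>"
    using a b by (auto intro!: mult_nonneg_nonneg divide_nonneg_pos)
  show "(\<integral>\<^sup>+x. ennreal (inv_gamma_density \<alpha> \<beta> x * x ^ j) \<partial>lborel) = ennreal (\<beta> ^ j * Gamma (\<alpha> - real j) / Gamma \<alpha>)"
    by (rule ig_moment_nn[OF a b])
qed

lemma Gamma_ratio1: "(\<alpha>::real) > 1 \<Longrightarrow> Gamma (\<alpha> - 1) / Gamma \<alpha> = 1 / (\<alpha> - 1)"
proof -
  assume a: "\<alpha> > 1"
  have "\<alpha> - 1 \<notin> \<int>\<^sub>\<le>\<^sub>0"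
  proof
    assume "\<alpha> - 1 \<in> \<int>\<^sub>\<le>\<^sub>0"
    then have "\<alpha> - 1 \<le> 0" by (rule nonpos_Ints_nonpos)
    with a show False by simp
  qed
  then have "Gamma (\<alpha> - 1 + 1) = (\<alpha> - 1) * Gamma (\<alpha> - 1)" by (rule Gamma_plus1)
  then have g: "Gamma \<alpha> = (\<alpha> - 1) * Gamma (\<alpha> - 1)" by simp
  have gp0: "Gamma (\<alpha> - 1) > 0" by (rule Gamma_real_pos) (use a in simp)
  then have gp: "Gamma (\<alpha> - 1) \<noteq> 0" by linarith
  have "Gamma (\<alpha> - 1) / ((\<alpha> - 1) * Gamma (\<alpha> - 1)) = 1 / (\<alpha> - 1)"
    using gp by simp
  then show ?thesis unfolding g .
qed

lemma Gamma_ratio2: "(\<alpha>::real) > 2 \<Longrightarrow> Gamma (\<alpha> - 2) / Gamma \<alpha> = 1 / ((\<alpha> - 1) * (\<alpha> - 2))"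
proof -
  assume a: "\<alpha> > 2"
  have "\<alpha> - 2 \<notin> \<int>\<^sub>\<le>\<^sub>0"
  proof
    assume "\<alpha> - 2 \<in> \<int>\<^sub>\<le>\<^sub>0"
    then have "\<alpha> - 2 \<le> 0" by (rule nonpos_Ints_nonpos)
    with a show False by simp
  qed
  then have "Gamma (\<alpha> - 2 + 1) = (\<alpha> - 2) * Gamma (\<alpha> - 2)" by (rule Gamma_plus1)
  moreover have "\<alpha> - 2 + 1 = \<alpha> - 1" by simp
  ultimately have g2: "Gamma (\<alpha> - 1) = (\<alpha> - 2) * Gamma (\<alpha> - 2)" by simp
  have r1: "Gamma (\<alpha> - 1) / Gamma \<alpha> = 1 / (\<alpha> - 1)" using a by (intro Gamma_ratio1) auto
  have d: "\<alpha> - 2 \<noteq> 0" using a by simp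
  have "Gamma (\<alpha> - 2) / Gamma \<alpha> = (1 / (\<alpha> - 2)) * ((\<alpha> - 2) * (Gamma (\<alpha> - 2) / Gamma \<alpha>))"
    using d by simp
  also have "\<dots> = (1 / (\<alpha> - 2)) * (Gamma (\<alpha> - 1) / Gamma \<alpha>)"
    unfolding g2 by simp
  also have "\<dots> = 1 / ((\<alpha> - 1) * (\<alpha> - 2))" unfolding r1 by simp
  finally show ?thesis .
qed

lemma ig_quad_bochner:
  assumes a: "\<alpha> > 2" and b: "\<beta> > 0"
  shows "has_bochner_integral lborel (\<lambda>x. inv_gamma_density \<alpha> \<beta> x * (k0 + k1 * x + k2 * x\<^sup>2))
           (k0 + k1 * (\<beta> / (\<alpha> - 1)) + k2 * (\<beta>\<^sup>2 / ((\<alpha> - 1) * (\<alpha> - 2))))"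
proof -
  have m0: "has_bochner_integral lborel (\<lambda>x. inv_gamma_density \<alpha> \<beta> x * x ^ 0) 1"
  proof -
    have "\<alpha> > 0" using a by simp
    then have "Gamma \<alpha> > 0" by (rule Gamma_real_pos)
    then have "Gamma \<alpha> \<noteq> 0" by linarith
    then show ?thesis using ig_moment[of 0 \<alpha> \<beta>] a b by simp
  qed
  have m1: "has_bochner_integral lborel (\<lambda>x. inv_gamma_density \<alpha> \<beta> x * x ^ 1) (\<beta> / (\<alpha> - 1))"
  proof -
    have "\<beta> * Gamma (\<alpha> - 1) / Gamma \<alpha> = \<beta> * (Gamma (\<alpha> - 1) / Gamma \<alpha>)" by simp
    also have "\<dots> = \<beta> / (\<alpha> - 1)" using Gamma_ratio1[of \<alpha>] a by simp
    finally show ?thesis using ig_moment[of 1 \<alpha> \<beta>] a b by simp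
  qed
  have m2: "has_bochner_integral lborel (\<lambda>x. inv_gamma_density \<alpha> \<beta> x * x ^ 2) (\<beta>\<^sup>2 / ((\<alpha> - 1) * (\<alpha> - 2)))"
  proof -
    have "\<beta> ^ 2 * Gamma (\<alpha> - real 2) / Gamma \<alpha> = \<beta>\<^sup>2 / ((\<alpha> - 1) * (\<alpha> - 2))"
      using Gamma_ratio2[of \<alpha>] a by (simp add: times_divide_eq_right[symmetric])
    then show ?thesis using ig_moment[of 2 \<alpha> \<beta>] a b by simp
  qed
  have "has_bochner_integral lborel (\<lambda>x. (inv_gamma_density \<alpha> \<beta> x * x ^ 0) * k0 + (inv_gamma_density \<alpha> \<beta> x * x ^ 1) * k1 + (inv_gamma_density \<alpha> \<beta> x * x ^ 2) * k2)
     (1 * k0 + (\<beta> / (\<alpha> - 1)) * k1 + (\<beta>\<^sup>2 / ((\<alpha> - 1) * (\<alpha> - 2))) * k2)"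
    by (intro has_bochner_integral_add has_bochner_integral_mult_left m0 m1 m2)
  then show ?thesis by (simp add: algebra_simps power2_eq_square)
qed

lemma ig_quad_nn:
  assumes a: "\<alpha> > 2" and b: "\<beta> > 0" and P: "P \<ge> 0" and w: "w \<ge> 0"
  shows "(\<integral>\<^sup>+x. ennreal (P + w * (c - x)\<^sup>2) \<partial>inv_gamma_M \<alpha> \<beta>)
       = ennreal (P + w * (c\<^sup>2 - 2 * c * (\<beta> / (\<alpha> - 1)) + \<beta>\<^sup>2 / ((\<alpha> - 1) * (\<alpha> - 2))))"
proof -
  have nn: "0 \<le> inv_gamma_density \<alpha> \<beta> x" for x
    using b Gamma_real_pos[of \<alpha>] a by (auto simp: inv_gamma_density_def intro!: divide_nonneg_pos)
  have hb: "has_bochner_integral lborel (\<lambda>x. inv_gamma_density \<alpha> \<beta> x * ((P + w * c\<^sup>2) + (- 2 * w * c) * x + w * x\<^sup>2))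
           ((P + w * c\<^sup>2) + (- 2 * w * c) * (\<beta> / (\<alpha> - 1)) + w * (\<beta>\<^sup>2 / ((\<alpha> - 1) * (\<alpha> - 2))))"
    by (rule ig_quad_bochner[OF a b])
  have eqf: "(\<lambda>x. inv_gamma_density \<alpha> \<beta> x * ((P + w * c\<^sup>2) + (- 2 * w * c) * x + w * x\<^sup>2))
      = (\<lambda>x. inv_gamma_density \<alpha> \<beta> x * (P + w * (c - x)\<^sup>2))"
    by (auto simp: power2_eq_square algebra_simps)
  have "(\<integral>\<^sup>+x. ennreal (P + w * (c - x)\<^sup>2) \<partial>inv_gamma_M \<alpha> \<beta>)
      = (\<integral>\<^sup>+x. ennreal (inv_gamma_density \<alpha> \<beta> x) * ennreal (P + w * (c - x)\<^sup>2) \<partial>lborel)"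
    unfolding inv_gamma_M_def by (subst nn_integral_density) (auto simp: inv_gamma_density_def)
  also have "\<dots> = (\<integral>\<^sup>+x. ennreal (inv_gamma_density \<alpha> \<beta> x * (P + w * (c - x)\<^sup>2)) \<partial>lborel)"
    using nn P w by (intro nn_integral_cong) (simp add: ennreal_mult)
  also have "\<dots> = ennreal (integral\<^sup>L lborel (\<lambda>x. inv_gamma_density \<alpha> \<beta> x * (P + w * (c - x)\<^sup>2)))"
  proof (rule nn_integral_eq_integral)
    show "integrable lborel (\<lambda>x. inv_gamma_density \<alpha> \<beta> x * (P + w * (c - x)\<^sup>2))"
      using hb unfolding eqf by (rule integrable.intros)
    show "AE x in lborel. 0 \<le> inv_gamma_density \<alpha> \<beta> x * (P + w * (c - x)\<^sup>2)"
      using nn P w by (intro AE_I2 mult_nonneg_nonneg add_nonneg_nonneg) auto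
  qed
  also have "integral\<^sup>L lborel (\<lambda>x. inv_gamma_density \<alpha> \<beta> x * (P + w * (c - x)\<^sup>2))
      = (P + w * c\<^sup>2) + (- 2 * w * c) * (\<beta> / (\<alpha> - 1)) + w * (\<beta>\<^sup>2 / ((\<alpha> - 1) * (\<alpha> - 2)))"
    using hb unfolding eqf by (rule has_bochner_integral_integral_eq)
  finally show ?thesis by (simp add: algebra_simps)
qed



locale pps =
  fixes M :: "'i \<Rightarrow> real measure" and I :: "'i set"
  assumes ps: "\<And>i. prob_space (M i)" and fin: "finite I"
begin

lemma psf: "product_sigma_finite M"
  unfolding product_sigma_finite_def using ps prob_space_imp_sigma_finite by blast

interpretation product_sigma_finite M by (rule psf)

lemma P_prob: "prob_space (PiM I M)"
  by (rule prob_space_PiM) (rule ps)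

lemma E1:
  fixes g :: "real \<Rightarrow> real"
  assumes i: "i \<in> I" and g: "integrable (M i) g"
  shows "integrable (PiM I M) (\<lambda>x. g (x i))" "(\<integral>x. g (x i) \<partial>PiM I M) = integral\<^sup>L (M i) g"
proof -
  define f where "f k = (if k = i then g else (\<lambda>_. 1::real))" for k
  have int: "integrable (M k) (f k)" if "k \<in> I" for k
  proof (cases "k = i")
    case False
    interpret prob_space "M k" by (rule ps)
    show ?thesis using False by (simp add: f_def)
  qed (use g in \<open>simp add: f_def\<close>)
  have pr: "(\<Prod>k\<in>I. f k (x k)) = g (x i)" for x
  proof -
    have "(\<Prod>k\<in>I. f k (x k)) = (\<Prod>k\<in>I. if k = i then g (x k) else 1)"
      by (rule prod.cong) (auto simp: f_def)
    also have "\<dots> = g (x i)" using i fin by simp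
    finally show ?thesis .
  qed
  have pr2: "(\<Prod>k\<in>I. integral\<^sup>L (M k) (f k)) = integral\<^sup>L (M i) g"
  proof -
    have "(\<Prod>k\<in>I. integral\<^sup>L (M k) (f k)) = (\<Prod>k\<in>I. if k = i then integral\<^sup>L (M i) g else 1)"
    proof (rule prod.cong)
      fix k assume "k \<in> I"
      interpret prob_space "M k" by (rule ps)
      show "integral\<^sup>L (M k) (f k) = (if k = i then integral\<^sup>L (M i) g else 1)"
        by (simp add: f_def prob_space)
    qed simp
    also have "\<dots> = integral\<^sup>L (M i) g" using i fin by simp
    finally show ?thesis .
  qed
  show "integrable (PiM I M) (\<lambda>x. g (x i))"
    using product_integrable_prod[OF fin int] unfolding pr .
  show "(\<integral>x. g (x i) \<partial>PiM I M) = integral\<^sup>L (M i) g"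
    using product_integral_prod[OF fin int] unfolding pr pr2 .
qed

lemma E2:
  fixes g h :: "real \<Rightarrow> real"
  assumes i: "i \<in> I" and j: "j \<in> I" and ij: "i \<noteq> j"
    and g: "integrable (M i) g" and h: "integrable (M j) h"
  shows "integrable (PiM I M) (\<lambda>x. g (x i) * h (x j))"
    "(\<integral>x. g (x i) * h (x j) \<partial>PiM I M) = integral\<^sup>L (M i) g * integral\<^sup>L (M j) h"
proof -
  define f where "f k = (if k = i then g else if k = j then h else (\<lambda>_. 1::real))" for k
  have int: "integrable (M k) (f k)" if "k \<in> I" for k
  proof -
    interpret prob_space "M k" by (rule ps)
    show ?thesis using g h by (auto simp: f_def)
  qed
  have pr: "(\<Prod>k\<in>I. f k (x k)) = g (x i) * h (x j)" for x
  proof -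
    have "(\<Prod>k\<in>I. f k (x k)) = (\<Prod>k\<in>I. (if k = i then g (x k) else 1) * (if k = j then h (x k) else 1))"
      by (rule prod.cong) (use ij in \<open>auto simp: f_def\<close>)
    also have "\<dots> = (\<Prod>k\<in>I. if k = i then g (x k) else 1) * (\<Prod>k\<in>I. if k = j then h (x k) else 1)"
      by (rule prod.distrib)
    also have "\<dots> = g (x i) * h (x j)" using i j fin by simp
    finally show ?thesis .
  qed
  have pr2: "(\<Prod>k\<in>I. integral\<^sup>L (M k) (f k)) = integral\<^sup>L (M i) g * integral\<^sup>L (M j) h"
  proof -
    have "(\<Prod>k\<in>I. integral\<^sup>L (M k) (f k)) = (\<Prod>k\<in>I. (if k = i then integral\<^sup>L (M i) g else 1) * (if k = j then integral\<^sup>L (M j) h else 1))"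
    proof (rule prod.cong)
      fix k assume "k \<in> I"
      interpret prob_space "M k" by (rule ps)
      show "integral\<^sup>L (M k) (f k) = (if k = i then integral\<^sup>L (M i) g else 1) * (if k = j then integral\<^sup>L (M j) h else 1)"
        using ij by (simp add: f_def prob_space)
    qed simp
    also have "\<dots> = integral\<^sup>L (M i) g * integral\<^sup>L (M j) h"
      unfolding prod.distrib using i j fin by simp
    finally show ?thesis .
  qed
  show "integrable (PiM I M) (\<lambda>x. g (x i) * h (x j))"
    using product_integrable_prod[OF fin int] unfolding pr .
  show "(\<integral>x. g (x i) * h (x j) \<partial>PiM I M) = integral\<^sup>L (M i) g * integral\<^sup>L (M j) h"
    using product_integral_prod[OF fin int] unfolding pr pr2 .
qed

lemma sum_lin:
  fixes g :: "'i \<Rightarrow> real \<Rightarrow> real"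
  assumes g: "\<And>i. i \<in> I \<Longrightarrow> integrable (M i) (g i)"
  shows "integrable (PiM I M) (\<lambda>x. \<Sum>i\<in>I. g i (x i))"
    "(\<integral>x. (\<Sum>i\<in>I. g i (x i)) \<partial>PiM I M) = (\<Sum>i\<in>I. integral\<^sup>L (M i) (g i))"
proof -
  show "integrable (PiM I M) (\<lambda>x. \<Sum>i\<in>I. g i (x i))"
    by (rule Bochner_Integration.integrable_sum) (rule E1(1)[OF _ g], assumption+)
  show "(\<integral>x. (\<Sum>i\<in>I. g i (x i)) \<partial>PiM I M) = (\<Sum>i\<in>I. integral\<^sup>L (M i) (g i))"
    by (subst Bochner_Integration.integral_sum) (auto intro!: E1[OF _ g] sum.cong)
qed

lemma sum_sq:
  fixes g :: "'i \<Rightarrow> real \<Rightarrow> real"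
  assumes g: "\<And>i. i \<in> I \<Longrightarrow> integrable (M i) (g i)"
    and g2: "\<And>i. i \<in> I \<Longrightarrow> integrable (M i) (\<lambda>t. (g i t)\<^sup>2)"
  shows "integrable (PiM I M) (\<lambda>x. (\<Sum>i\<in>I. g i (x i))\<^sup>2)"
    "(\<integral>x. (\<Sum>i\<in>I. g i (x i))\<^sup>2 \<partial>PiM I M) =
       (\<Sum>i\<in>I. integral\<^sup>L (M i) (g i))\<^sup>2 + (\<Sum>i\<in>I. integral\<^sup>L (M i) (\<lambda>t. (g i t)\<^sup>2) - (integral\<^sup>L (M i) (g i))\<^sup>2)"
proof -
  define mu where "mu i = integral\<^sup>L (M i) (g i)" for i
  define s where "s i = integral\<^sup>L (M i) (\<lambda>t. (g i t)\<^sup>2)" for i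
  have eqsq: "(\<Sum>i\<in>I. g i (x i))\<^sup>2 = (\<Sum>i\<in>I. \<Sum>j\<in>I. g i (x i) * g j (x j))" for x
    by (simp add: power2_eq_square sum_product)
  have ij_int: "integrable (PiM I M) (\<lambda>x. g i (x i) * g j (x j))"
    and ij_val: "(\<integral>x. g i (x i) * g j (x j) \<partial>PiM I M) = (if i = j then s i else mu i * mu j)"
    if "i \<in> I" "j \<in> I" for i j
  proof -
    have "integrable (PiM I M) (\<lambda>x. g i (x i) * g j (x j)) \<and>
      (\<integral>x. g i (x i) * g j (x j) \<partial>PiM I M) = (if i = j then s i else mu i * mu j)"
    proof (cases "i = j")
      case True
      have "(\<lambda>x. g i (x i) * g j (x j)) = (\<lambda>x. (\<lambda>t. (g i t)\<^sup>2) (x i))"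
        using True by (simp add: power2_eq_square)
      then show ?thesis using E1[OF that(1) g2[OF that(1)]] True by (simp add: s_def)
    next
      case False
      then show ?thesis using E2[OF that False g[OF that(1)] g[OF that(2)]] by (simp add: mu_def)
    qed
    then show "integrable (PiM I M) (\<lambda>x. g i (x i) * g j (x j))"
      "(\<integral>x. g i (x i) * g j (x j) \<partial>PiM I M) = (if i = j then s i else mu i * mu j)" by auto
  qed
  show "integrable (PiM I M) (\<lambda>x. (\<Sum>i\<in>I. g i (x i))\<^sup>2)"
    unfolding eqsq by (intro Bochner_Integration.integrable_sum ij_int)
  have "(\<integral>x. (\<Sum>i\<in>I. g i (x i))\<^sup>2 \<partial>PiM I M) = (\<Sum>i\<in>I. \<Sum>j\<in>I. (if i = j then s i else mu i * mu j))"
    unfolding eqsq using ij_int ij_val by (simp add: Bochner_Integration.integral_sum Bochner_Integration.integrable_sum)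
  also have "\<dots> = (\<Sum>i\<in>I. \<Sum>j\<in>I. mu i * mu j + (if i = j then s i - (mu i)\<^sup>2 else 0))"
    by (intro sum.cong refl) (auto simp: power2_eq_square)
  also have "\<dots> = (\<Sum>i\<in>I. mu i)\<^sup>2 + (\<Sum>i\<in>I. s i - (mu i)\<^sup>2)"
    using fin by (simp add: sum.distrib power2_eq_square sum_product)
  finally show "(\<integral>x. (\<Sum>i\<in>I. g i (x i))\<^sup>2 \<partial>PiM I M) =
       (\<Sum>i\<in>I. integral\<^sup>L (M i) (g i))\<^sup>2 + (\<Sum>i\<in>I. integral\<^sup>L (M i) (\<lambda>t. (g i t)\<^sup>2) - (integral\<^sup>L (M i) (g i))\<^sup>2)"
    by (simp add: mu_def s_def)
qed

end



lemma nM_prob: "v > 0 \<Longrightarrow> prob_space (normal_M m v)"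
  unfolding normal_M_def by (rule prob_space_normal_density) simp

lemma nM_mom_lborel:
  assumes v: "v > 0"
  shows "has_bochner_integral lborel (\<lambda>x. normal_density m (sqrt v) x * (cA + cB * (x - m) + cC * (x - m)^2 + cD * (x - m)^3 + cE * (x - m)^4))
     (cA + cC * v + cE * (3 * v\<^sup>2))"
proof -
  have s: "sqrt v > 0" using v by simp
  have m0: "has_bochner_integral lborel (\<lambda>x. normal_density m (sqrt v) x * (x - m)^0) 1"
    using normal_moment_even[where \<sigma>="sqrt v" and \<mu>=m and k=0] s by simp
  have m1: "has_bochner_integral lborel (\<lambda>x. normal_density m (sqrt v) x * (x - m)^1) 0"
    using normal_moment_odd[where \<sigma>="sqrt v" and \<mu>=m and k=0] s by simp
  have m2: "has_bochner_integral lborel (\<lambda>x. normal_density m (sqrt v) x * (x - m)^2) v"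
    using normal_moment_even[where \<sigma>="sqrt v" and \<mu>=m and k=1] s v by simp
  have m3: "has_bochner_integral lborel (\<lambda>x. normal_density m (sqrt v) x * (x - m)^3) 0"
    using normal_moment_odd[where \<sigma>="sqrt v" and \<mu>=m and k=1] s by (simp add: numeral_3_eq_3)
  have m4: "has_bochner_integral lborel (\<lambda>x. normal_density m (sqrt v) x * (x - m)^4) (3 * v\<^sup>2)"
  proof -
    have "fact (2 * 2) / ((2 / (sqrt v)\<^sup>2) ^ 2 * fact 2) = (3 * v\<^sup>2 :: real)"
      using v by (simp add: fact_numeral power2_eq_square field_simps)
    moreover have "(2 * 2 :: nat) = 4" by simp
    ultimately show ?thesis using normal_moment_even[where \<sigma>="sqrt v" and \<mu>=m and k=2] s by metis
  qed
  have h: "has_bochner_integral lborel (\<lambda>x.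
      (normal_density m (sqrt v) x * (x - m)^0) * cA + (normal_density m (sqrt v) x * (x - m)^1) * cB
    + (normal_density m (sqrt v) x * (x - m)^2) * cC + (normal_density m (sqrt v) x * (x - m)^3) * cD
    + (normal_density m (sqrt v) x * (x - m)^4) * cE) (1 * cA + 0 * cB + v * cC + 0 * cD + (3 * v\<^sup>2) * cE)"
    by (intro has_bochner_integral_add has_bochner_integral_mult_left m0 m1 m2 m3 m4)
  have e1: "(\<lambda>x.
      (normal_density m (sqrt v) x * (x - m)^0) * cA + (normal_density m (sqrt v) x * (x - m)^1) * cB
    + (normal_density m (sqrt v) x * (x - m)^2) * cC + (normal_density m (sqrt v) x * (x - m)^3) * cD
    + (normal_density m (sqrt v) x * (x - m)^4) * cE) = (\<lambda>x. normal_density m (sqrt v) x * (cA + cB * (x - m) + cC * (x - m)^2 + cD * (x - m)^3 + cE * (x - m)^4))"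
    by (rule ext) (simp only: distrib_left mult_ac power_0 power_one_right mult_1_right)
  have e2: "1 * cA + 0 * cB + v * cC + 0 * cD + (3 * v\<^sup>2) * cE = cA + cC * v + cE * (3 * v\<^sup>2)"
    by simp
  show ?thesis using h unfolding e1 e2 .
qed

lemma nM_mom:
  assumes v: "v > 0"
  shows "has_bochner_integral (normal_M m v) (\<lambda>x. cA + cB * (x - m) + cC * (x - m)^2 + cD * (x - m)^3 + cE * (x - m)^4)
     (cA + cC * v + cE * (3 * v\<^sup>2))"
  unfolding normal_M_def
  by (rule has_bochner_integral_density) (use nM_mom_lborel[OF v] in auto)

lemma nM_hb:
  assumes v: "v > 0"
    and f: "\<And>x. f x = cA + cB * (x - m) + cC * (x - m)^2 + cD * (x - m)^3 + cE * (x - m)^4"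
  shows "integrable (normal_M m v) f" "integral\<^sup>L (normal_M m v) f = cA + cC * v + cE * (3 * v\<^sup>2)"
proof -
  have "f = (\<lambda>x. cA + cB * (x - m) + cC * (x - m)^2 + cD * (x - m)^3 + cE * (x - m)^4)"
    using f by auto
  then have h: "has_bochner_integral (normal_M m v) f (cA + cC * v + cE * (3 * v\<^sup>2))"
    using nM_mom[OF v] by simp
  show "integrable (normal_M m v) f" using h by (rule integrable.intros)
  show "integral\<^sup>L (normal_M m v) f = cA + cC * v + cE * (3 * v\<^sup>2)"
    using h by (rule has_bochner_integral_integral_eq)
qed



lemma pps_normal: "v > 0 \<Longrightarrow> pps (\<lambda>i. normal_M (mm i) v) {..<n::nat}"
  unfolding pps_def using nM_prob by auto

lemma prod_facts:
  fixes mm :: "nat \<Rightarrow> real" and v mb :: real and n :: nat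
  assumes v: "v > 0"
  defines "P \<equiv> PiM {..<n} (\<lambda>i. normal_M (mm i) v)"
  shows "integrable P (\<lambda>x. \<Sum>i<n. (x i - mm i))"
    "(\<integral>x. (\<Sum>i<n. (x i - mm i)) \<partial>P) = 0"
    "integrable P (\<lambda>x. (\<Sum>i<n. (x i - mm i))\<^sup>2)"
    "(\<integral>x. (\<Sum>i<n. (x i - mm i))\<^sup>2 \<partial>P) = real n * v"
    "integrable P (\<lambda>x. \<Sum>i<n. (x i - mb)\<^sup>2)"
    "(\<integral>x. (\<Sum>i<n. (x i - mb)\<^sup>2) \<partial>P) = (\<Sum>i<n. (mm i - mb)\<^sup>2 + v)"
    "integrable P (\<lambda>x. (\<Sum>i<n. (x i - mb)\<^sup>2)\<^sup>2)"
    "(\<integral>x. (\<Sum>i<n. (x i - mb)\<^sup>2)\<^sup>2 \<partial>P) = (\<Sum>i<n. (mm i - mb)\<^sup>2 + v)\<^sup>2 + (\<Sum>i<n. 4 * (mm i - mb)\<^sup>2 * v + 2 * v\<^sup>2)"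
proof -
  interpret pps "\<lambda>i. normal_M (mm i) v" "{..<n}" by (rule pps_normal[OF v])
  have g1: "integrable (normal_M (mm i) v) (\<lambda>t. t - mm i)"
    "integral\<^sup>L (normal_M (mm i) v) (\<lambda>t. t - mm i) = 0" for i
    using nM_hb[OF v, where f="\<lambda>t. t - mm i" and cA=0 and cB=1 and cC=0 and cD=0 and cE=0 and m="mm i"] by simp_all
  have g1s: "integrable (normal_M (mm i) v) (\<lambda>t. (t - mm i)\<^sup>2)"
    "integral\<^sup>L (normal_M (mm i) v) (\<lambda>t. (t - mm i)\<^sup>2) = v" for i
    using nM_hb[OF v, where f="\<lambda>t. (t - mm i)\<^sup>2" and cA=0 and cB=0 and cC=1 and cD=0 and cE=0 and m="mm i"] by simp_all
  have g2: "integrable (normal_M (mm i) v) (\<lambda>t. (t - mb)\<^sup>2)"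
    "integral\<^sup>L (normal_M (mm i) v) (\<lambda>t. (t - mb)\<^sup>2) = (mm i - mb)\<^sup>2 + v" for i
  proof -
    have e: "(t - mb)\<^sup>2 = (mm i - mb)\<^sup>2 + (2 * (mm i - mb)) * (t - mm i) + 1 * (t - mm i)^2 + 0 * (t - mm i)^3 + 0 * (t - mm i)^4" for t
      by (simp add: power2_eq_square algebra_simps)
    show "integrable (normal_M (mm i) v) (\<lambda>t. (t - mb)\<^sup>2)"
      "integral\<^sup>L (normal_M (mm i) v) (\<lambda>t. (t - mb)\<^sup>2) = (mm i - mb)\<^sup>2 + v"
      using nM_hb[OF v, where f="\<lambda>t. (t - mb)\<^sup>2", OF e] by simp_all
  qed
  have g2s: "integrable (normal_M (mm i) v) (\<lambda>t. ((t - mb)\<^sup>2)\<^sup>2)"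
    "integral\<^sup>L (normal_M (mm i) v) (\<lambda>t. ((t - mb)\<^sup>2)\<^sup>2) = (mm i - mb)^4 + 6 * (mm i - mb)\<^sup>2 * v + 3 * v\<^sup>2" for i
  proof -
    have e: "((t - mb)\<^sup>2)\<^sup>2 = (mm i - mb)^4 + (4 * (mm i - mb)^3) * (t - mm i) + (6 * (mm i - mb)\<^sup>2) * (t - mm i)^2 + (4 * (mm i - mb)) * (t - mm i)^3 + 1 * (t - mm i)^4" for t
      by (simp add: power2_eq_square power3_eq_cube power4_eq_xxxx algebra_simps)
    show "integrable (normal_M (mm i) v) (\<lambda>t. ((t - mb)\<^sup>2)\<^sup>2)"
      "integral\<^sup>L (normal_M (mm i) v) (\<lambda>t. ((t - mb)\<^sup>2)\<^sup>2) = (mm i - mb)^4 + 6 * (mm i - mb)\<^sup>2 * v + 3 * v\<^sup>2"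
      using nM_hb[OF v, where f="\<lambda>t. ((t - mb)\<^sup>2)\<^sup>2", OF e] by (simp_all add: algebra_simps)
  qed
  show "integrable P (\<lambda>x. \<Sum>i<n. (x i - mm i))"
    unfolding P_def using sum_lin(1)[of "\<lambda>i t. t - mm i"] g1 by simp
  show "(\<integral>x. (\<Sum>i<n. (x i - mm i)) \<partial>P) = 0"
    unfolding P_def using sum_lin(2)[of "\<lambda>i t. t - mm i"] g1 by simp
  show "integrable P (\<lambda>x. (\<Sum>i<n. (x i - mm i))\<^sup>2)"
    unfolding P_def using sum_sq(1)[of "\<lambda>i t. t - mm i"] g1 g1s by simp
  show "(\<integral>x. (\<Sum>i<n. (x i - mm i))\<^sup>2 \<partial>P) = real n * v"
    unfolding P_def using sum_sq(2)[of "\<lambda>i t. t - mm i"] g1 g1s by simp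
  show "integrable P (\<lambda>x. \<Sum>i<n. (x i - mb)\<^sup>2)"
    unfolding P_def using sum_lin(1)[of "\<lambda>i t. (t - mb)\<^sup>2"] g2 by simp
  show "(\<integral>x. (\<Sum>i<n. (x i - mb)\<^sup>2) \<partial>P) = (\<Sum>i<n. (mm i - mb)\<^sup>2 + v)"
    unfolding P_def using sum_lin(2)[of "\<lambda>i t. (t - mb)\<^sup>2"] g2 by simp
  show "integrable P (\<lambda>x. (\<Sum>i<n. (x i - mb)\<^sup>2)\<^sup>2)"
    unfolding P_def using sum_sq(1)[of "\<lambda>i t. (t - mb)\<^sup>2"] g2 g2s by simp
  have "(\<integral>x. (\<Sum>i<n. (x i - mb)\<^sup>2)\<^sup>2 \<partial>P) = (\<Sum>i<n. (mm i - mb)\<^sup>2 + v)\<^sup>2 +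
      (\<Sum>i<n. ((mm i - mb)^4 + 6 * (mm i - mb)\<^sup>2 * v + 3 * v\<^sup>2) - ((mm i - mb)\<^sup>2 + v)\<^sup>2)"
    unfolding P_def using sum_sq(2)[of "\<lambda>i t. (t - mb)\<^sup>2"] g2 g2s by simp
  also have "(\<Sum>i<n. ((mm i - mb)^4 + 6 * (mm i - mb)\<^sup>2 * v + 3 * v\<^sup>2) - ((mm i - mb)\<^sup>2 + v)\<^sup>2)
      = (\<Sum>i<n. 4 * (mm i - mb)\<^sup>2 * v + 2 * v\<^sup>2)"
    by (intro sum.cong refl) (simp add: power2_eq_square power4_eq_xxxx algebra_simps)
  finally show "(\<integral>x. (\<Sum>i<n. (x i - mb)\<^sup>2)\<^sup>2 \<partial>P) = (\<Sum>i<n. (mm i - mb)\<^sup>2 + v)\<^sup>2 + (\<Sum>i<n. 4 * (mm i - mb)\<^sup>2 * v + 2 * v\<^sup>2)" .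
qed



lemma S_T_identity:
  fixes \<theta> mm :: "nat \<Rightarrow> real" and n :: nat and mb :: real
  assumes n: "n > 0" and mb: "mb = (\<Sum>i<n. mm i) / real n"
  shows "theta_bar n \<theta> = (\<Sum>i<n. (\<theta> i - mm i)) / real n + mb"
    "(\<Sum>i<n. (\<theta> i - theta_bar n \<theta>)\<^sup>2) = (\<Sum>i<n. (\<theta> i - mb)\<^sup>2) - (\<Sum>i<n. (\<theta> i - mm i))\<^sup>2 / real n"
proof -
  define Z where "Z = (\<Sum>i<n. (\<theta> i - mm i))"
  have sm: "(\<Sum>i<n. mm i) = real n * mb" using n mb by simp
  have st: "(\<Sum>i<n. \<theta> i) = Z + real n * mb"
    unfolding Z_def sum_subtractf sm by simp
  show tb: "theta_bar n \<theta> = (\<Sum>i<n. (\<theta> i - mm i)) / real n + mb"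
    unfolding theta_bar_def st Z_def[symmetric] using n by (simp add: field_simps)
  have sZ: "(\<Sum>i<n. (\<theta> i - mb)) = Z" unfolding sum_subtractf st by simp
  define q where "q = Z / real n"
  have "(\<Sum>i<n. (\<theta> i - theta_bar n \<theta>)\<^sup>2) = (\<Sum>i<n. ((\<theta> i - mb) - q)\<^sup>2)"
    unfolding tb Z_def[symmetric] q_def by (intro sum.cong refl) (simp add: algebra_simps)
  also have "\<dots> = (\<Sum>i<n. (\<theta> i - mb)\<^sup>2 - 2 * q * (\<theta> i - mb) + q\<^sup>2)"
    by (intro sum.cong refl) (simp add: power2_eq_square algebra_simps)
  also have "\<dots> = (\<Sum>i<n. (\<theta> i - mb)\<^sup>2) - 2 * q * (\<Sum>i<n. (\<theta> i - mb)) + real n * q\<^sup>2"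
    by (simp only: sum.distrib sum_subtractf sum_distrib_left[symmetric] sum_constant) simp
  also have "\<dots> = (\<Sum>i<n. (\<theta> i - mb)\<^sup>2) - Z\<^sup>2 / real n"
    unfolding sZ q_def using n by (simp add: power2_eq_square field_simps)
  finally show "(\<Sum>i<n. (\<theta> i - theta_bar n \<theta>)\<^sup>2) = (\<Sum>i<n. (\<theta> i - mb)\<^sup>2) - (\<Sum>i<n. (\<theta> i - mm i))\<^sup>2 / real n"
    unfolding Z_def .
qed

lemma quad_nonneg:
  fixes c \<beta> B k :: real
  assumes "0 < \<beta>" "\<beta> \<le> B" "k > 1"
  shows "c\<^sup>2 - 2 * c * (\<beta> / k) + B\<^sup>2 / (k * (k - 1)) \<ge> 0"
proof -
  have "\<beta>\<^sup>2 \<le> B\<^sup>2" using assms by (intro power_mono) auto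
  moreover have "k * (k - 1) > 0" "k * (k - 1) \<le> k\<^sup>2" using assms by (auto simp: power2_eq_square algebra_simps)
  ultimately have "\<beta>\<^sup>2 / k\<^sup>2 \<le> B\<^sup>2 / (k * (k - 1))"
    by (meson frac_le order.trans zero_le_power2 less_imp_le)
  moreover have "c\<^sup>2 - 2 * c * (\<beta> / k) + \<beta>\<^sup>2 / k\<^sup>2 = (c - \<beta> / k)\<^sup>2"
    using assms by (simp add: power2_eq_square field_simps)
  moreover have "(c - \<beta> / k)\<^sup>2 \<ge> 0" by simp
  ultimately show ?thesis by linarith
qed

lemma middle:
  fixes n :: nat and mm :: "nat \<Rightarrow> real" and v \<alpha> b0 c Yb :: real
  assumes v: "v > 0" and n: "n > 0" and a: "\<alpha> > 2" and b0: "b0 > 0"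
  defines "mb \<equiv> (\<Sum>i<n. mm i) / real n"
  defines "SA \<equiv> (\<Sum>i<n. (mm i - mb)\<^sup>2)"
  defines "ET \<equiv> SA + real n * v"
  defines "ET2 \<equiv> ET\<^sup>2 + (\<Sum>i<n. 4 * (mm i - mb)\<^sup>2 * v + 2 * v\<^sup>2)"
  shows "(\<integral>\<^sup>+\<theta>. (\<integral>\<^sup>+A'. ennreal (real n * (theta_bar n \<theta> - Yb)\<^sup>2 + real n * (c - A')\<^sup>2)
            \<partial>inv_gamma_M \<alpha> (b0 + 1/2 * (\<Sum>i<n. (\<theta> i - theta_bar n \<theta>)\<^sup>2)))
          \<partial>PiM {..<n} (\<lambda>i. normal_M (mm i) v))
     \<le> ennreal (v + real n * (mb - Yb)\<^sup>2 + real n * c\<^sup>2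
           - 2 * real n * c * (b0 + (SA + (real n - 1) * v) / 2) / (\<alpha> - 1)
           + real n * (b0\<^sup>2 + b0 * ET + ET2 / 4) / ((\<alpha> - 1) * (\<alpha> - 2)))"
proof -
  define P where "P = PiM {..<n} (\<lambda>i. normal_M (mm i) v)"
  have mbe: "mb = (\<Sum>i<n. mm i) / real n" by (simp add: mb_def)
  define fZ where "fZ x = (\<Sum>i<n. (x i - mm i))" for x :: "nat \<Rightarrow> real"
  define fT where "fT x = (\<Sum>i<n. (x i - mb)\<^sup>2)" for x :: "nat \<Rightarrow> real"
  define k where "k = \<alpha> - 1"
  define d2 where "d2 = (\<alpha> - 1) * (\<alpha> - 2)"
  have k: "k > 1" using a by (simp add: k_def)
  have d2: "d2 > 0" using a by (simp add: d2_def)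
  have d2k: "d2 = k * (k - 1)" by (simp add: d2_def k_def algebra_simps)
  have nr: "real n > 0" using n by simp
  define H where "H x = real n * (theta_bar n x - Yb)\<^sup>2
      + real n * (c\<^sup>2 - 2 * c * ((b0 + 1/2 * (fT x - (fZ x)\<^sup>2 / real n)) / k) + (b0 + fT x / 2)\<^sup>2 / d2)" for x
  define K0 where "K0 = real n * (mb - Yb)\<^sup>2 + real n * c\<^sup>2 - 2 * real n * c * b0 / k + real n * b0\<^sup>2 / d2"
  define KZ2 where "KZ2 = 1 / real n + c / k"
  define KZ where "KZ = 2 * (mb - Yb)"
  define KT where "KT = - real n * c / k + real n * b0 / d2"
  define KT2 where "KT2 = real n / (4 * d2)"
  have Hform: "H x = K0 + KZ2 * (fZ x)\<^sup>2 + KZ * fZ x + KT * fT x + KT2 * (fT x)\<^sup>2" for x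
  proof -
    have tb: "theta_bar n x = fZ x / real n + mb"
      unfolding fZ_def using S_T_identity(1)[OF n mbe] .
    show ?thesis unfolding H_def tb K0_def KZ2_def KZ_def KT_def KT2_def using nr k d2
      by (simp add: power2_eq_square field_simps)
  qed
  have inner: "(\<integral>\<^sup>+A'. ennreal (real n * (theta_bar n x - Yb)\<^sup>2 + real n * (c - A')\<^sup>2)
            \<partial>inv_gamma_M \<alpha> (b0 + 1/2 * (\<Sum>i<n. (x i - theta_bar n x)\<^sup>2))) \<le> ennreal (H x)"
    and Hnn: "H x \<ge> 0" for x
  proof -
    define \<beta> where "\<beta> = b0 + 1/2 * (\<Sum>i<n. (x i - theta_bar n x)\<^sup>2)"
    have Sx: "(\<Sum>i<n. (x i - theta_bar n x)\<^sup>2) = fT x - (fZ x)\<^sup>2 / real n"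
      unfolding fT_def fZ_def using S_T_identity(2)[OF n mbe] .
    have bpos: "\<beta> > 0" unfolding \<beta>_def using b0 by (auto intro!: add_pos_nonneg sum_nonneg)
    have ble: "\<beta> \<le> b0 + fT x / 2" unfolding \<beta>_def Sx using nr by simp
    have eq: "(\<integral>\<^sup>+A'. ennreal (real n * (theta_bar n x - Yb)\<^sup>2 + real n * (c - A')\<^sup>2) \<partial>inv_gamma_M \<alpha> \<beta>)
        = ennreal (real n * (theta_bar n x - Yb)\<^sup>2 + real n * (c\<^sup>2 - 2 * c * (\<beta> / (\<alpha> - 1)) + \<beta>\<^sup>2 / ((\<alpha> - 1) * (\<alpha> - 2))))"
      by (rule ig_quad_nn[OF a bpos]) auto
    have "\<beta>\<^sup>2 \<le> (b0 + fT x / 2)\<^sup>2" using bpos ble by (intro power_mono) auto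
    then have "\<beta>\<^sup>2 / d2 \<le> (b0 + fT x / 2)\<^sup>2 / d2" using d2 by (intro divide_right_mono) auto
    then have le: "real n * (theta_bar n x - Yb)\<^sup>2 + real n * (c\<^sup>2 - 2 * c * (\<beta> / (\<alpha> - 1)) + \<beta>\<^sup>2 / ((\<alpha> - 1) * (\<alpha> - 2)))
        \<le> H x"
      unfolding H_def \<beta>_def[symmetric] Sx[symmetric] using nr unfolding d2_def[symmetric] unfolding k_def[symmetric]
      by (intro add_left_mono mult_left_mono) auto
    show "(\<integral>\<^sup>+A'. ennreal (real n * (theta_bar n x - Yb)\<^sup>2 + real n * (c - A')\<^sup>2)
            \<partial>inv_gamma_M \<alpha> (b0 + 1/2 * (\<Sum>i<n. (x i - theta_bar n x)\<^sup>2))) \<le> ennreal (H x)"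
      unfolding \<beta>_def[symmetric] eq using le by (rule ennreal_leI)
    have q: "c\<^sup>2 - 2 * c * (\<beta> / k) + (b0 + fT x / 2)\<^sup>2 / (k * (k - 1)) \<ge> 0"
      by (rule quad_nonneg[OF bpos ble k])
    have "H x = real n * (theta_bar n x - Yb)\<^sup>2 + real n * (c\<^sup>2 - 2 * c * (\<beta> / k) + (b0 + fT x / 2)\<^sup>2 / (k * (k - 1)))"
      unfolding H_def \<beta>_def Sx d2k by simp
    then show "H x \<ge> 0"
      using q by (metis add_nonneg_nonneg mult_nonneg_nonneg zero_le_power2 of_nat_0_le_iff)
  qed
  have pf1: "integrable P (\<lambda>x. \<Sum>i<n. (x i - mm i))" "(\<integral>x. (\<Sum>i<n. (x i - mm i)) \<partial>P) = 0"
    "integrable P (\<lambda>x. (\<Sum>i<n. (x i - mm i))\<^sup>2)" "(\<integral>x. (\<Sum>i<n. (x i - mm i))\<^sup>2 \<partial>P) = real n * v"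
    unfolding P_def by (rule prod_facts(1-4)[OF v])+
  have pf2: "integrable P (\<lambda>x. \<Sum>i<n. (x i - mb)\<^sup>2)"
    "(\<integral>x. (\<Sum>i<n. (x i - mb)\<^sup>2) \<partial>P) = (\<Sum>i<n. (mm i - mb)\<^sup>2 + v)"
    "integrable P (\<lambda>x. (\<Sum>i<n. (x i - mb)\<^sup>2)\<^sup>2)"
    "(\<integral>x. (\<Sum>i<n. (x i - mb)\<^sup>2)\<^sup>2 \<partial>P) = (\<Sum>i<n. (mm i - mb)\<^sup>2 + v)\<^sup>2 + (\<Sum>i<n. 4 * (mm i - mb)\<^sup>2 * v + 2 * v\<^sup>2)"
    unfolding P_def by (rule prod_facts(5-8)[OF v])+
  interpret prob_space P unfolding P_def by (rule pps.P_prob[OF pps_normal[OF v]])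
  have hbH: "has_bochner_integral P (\<lambda>x. K0 + KZ2 * (fZ x)\<^sup>2 + KZ * fZ x + KT * fT x + KT2 * (fT x)\<^sup>2)
      (K0 + KZ2 * (real n * v) + KZ * 0 + KT * (SA + real n * v) + KT2 * ET2)"
  proof -
    have c0: "has_bochner_integral P (\<lambda>x. K0) K0"
      by (simp add: has_bochner_integral_iff prob_space)
    have h1: "has_bochner_integral P (\<lambda>x. (fZ x)\<^sup>2) (real n * v)"
      unfolding fZ_def using pf1(3,4) by (simp add: has_bochner_integral_iff)
    have h2: "has_bochner_integral P fZ 0"
      unfolding fZ_def using pf1(1,2) by (simp add: has_bochner_integral_iff)
    have h3: "has_bochner_integral P fT (SA + real n * v)"
    proof -
      have "(\<Sum>i<n. (mm i - mb)\<^sup>2 + v) = SA + real n * v" by (simp add: SA_def sum.distrib)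
      then show ?thesis unfolding fT_def using pf2(1,2) by (simp add: has_bochner_integral_iff)
    qed
    have h4: "has_bochner_integral P (\<lambda>x. (fT x)\<^sup>2) ET2"
    proof -
      have "(\<Sum>i<n. (mm i - mb)\<^sup>2 + v) = ET" by (simp add: ET_def SA_def sum.distrib)
      then show ?thesis unfolding fT_def ET2_def using pf2(3,4) by (simp add: has_bochner_integral_iff)
    qed
    have "has_bochner_integral P (\<lambda>x. K0 + (fZ x)\<^sup>2 * KZ2 + fZ x * KZ + fT x * KT + (fT x)\<^sup>2 * KT2)
      (K0 + (real n * v) * KZ2 + 0 * KZ + (SA + real n * v) * KT + ET2 * KT2)"
      by (intro has_bochner_integral_add has_bochner_integral_mult_left c0 h1 h2 h3 h4)
    then show ?thesis by (simp add: mult_ac)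
  qed
  have "(\<integral>\<^sup>+\<theta>. (\<integral>\<^sup>+A'. ennreal (real n * (theta_bar n \<theta> - Yb)\<^sup>2 + real n * (c - A')\<^sup>2)
            \<partial>inv_gamma_M \<alpha> (b0 + 1/2 * (\<Sum>i<n. (\<theta> i - theta_bar n \<theta>)\<^sup>2))) \<partial>P)
      \<le> (\<integral>\<^sup>+x. ennreal (H x) \<partial>P)"
    by (intro nn_integral_mono inner)
  also have "\<dots> = ennreal (integral\<^sup>L P H)"
  proof (rule nn_integral_eq_integral)
    show "integrable P H" unfolding Hform[abs_def] using hbH by (rule integrable.intros)
  qed (auto intro: Hnn)
  also have "integral\<^sup>L P H = K0 + KZ2 * (real n * v) + KZ * 0 + KT * (SA + real n * v) + KT2 * ET2"
    unfolding Hform[abs_def] using hbH by (rule has_bochner_integral_integral_eq)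
  also have "\<dots> = v + real n * (mb - Yb)\<^sup>2 + real n * c\<^sup>2
           - 2 * real n * c * (b0 + (SA + (real n - 1) * v) / 2) / (\<alpha> - 1)
           + real n * (b0\<^sup>2 + b0 * ET + ET2 / 4) / ((\<alpha> - 1) * (\<alpha> - 2))"
    unfolding K0_def KZ2_def KZ_def KT_def KT2_def ET_def d2_def[symmetric] unfolding k_def[symmetric]
    using nr k d2 by (simp add: field_simps power2_eq_square)
  finally show ?thesis unfolding P_def .
qed



lemma core_p1:
  fixes nn m K e c t W b0 :: real
  assumes nn: "nn \<ge> 10" and K: "K = m + e" and m: "m = nn - 1" and e: "e > -2"
    and t: "0 \<le> t" "t \<le> W" and c: "\<bar>c\<bar> \<le> W" and b0: "b0 > 0"
  shows "2 * nn * c * t - 2 * nn * c * (2 * b0 + m * t) / K \<le> 4 * W * (\<bar>e\<bar> * W + 2 * b0)"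
proof -
  have Kpos: "K \<ge> nn / 2" using nn K m e by simp
  have Kp: "K > 0" using Kpos nn by simp
  have eq: "2 * nn * c * t - 2 * nn * c * (2 * b0 + m * t) / K = 2 * (c * (e * t - 2 * b0)) * (nn / K)"
    using Kp unfolding K by (simp add: field_simps)
  have r: "nn / K \<le> 2" using Kpos Kp nn by (simp add: divide_le_eq)
  have r0: "nn / K \<ge> 0" using Kp nn by simp
  have W0: "W \<ge> 0" using t by simp
  have a1: "\<bar>e * t - 2 * b0\<bar> \<le> \<bar>e\<bar> * W + 2 * b0"
  proof -
    have "\<bar>e * t - 2 * b0\<bar> \<le> \<bar>e * t\<bar> + \<bar>2 * b0\<bar>" by (rule abs_triangle_ineq4)
    also have "\<bar>e * t\<bar> = \<bar>e\<bar> * t" using t by (simp add: abs_mult)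
    also have "\<bar>e\<bar> * t \<le> \<bar>e\<bar> * W" using t by (intro mult_left_mono) auto
    finally show ?thesis using b0 by simp
  qed
  have a2: "\<bar>c * (e * t - 2 * b0)\<bar> \<le> W * (\<bar>e\<bar> * W + 2 * b0)"
    unfolding abs_mult using c a1 W0 by (intro mult_mono) auto
  have "2 * (c * (e * t - 2 * b0)) * (nn / K) \<le> 2 * \<bar>c * (e * t - 2 * b0)\<bar> * (nn / K)"
    using r0 by (intro mult_right_mono) auto
  also have "\<dots> \<le> 2 * (W * (\<bar>e\<bar> * W + 2 * b0)) * 2"
    using a2 r r0 by (intro mult_mono) auto
  finally show ?thesis unfolding eq by simp
qed

lemma core_p2:
  fixes nn m K e t W b0 v V Q Mx :: real
  assumes nn: "nn \<ge> 10" and K: "K = m + e" and m: "m = nn - 1" and e: "e > -2"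
    and t: "0 \<le> t" "t \<le> W" and b0: "b0 > 0" and v: "0 \<le> v" "v \<le> V"
    and Q: "0 \<le> Q" "Q \<le> m * Mx" and Mx: "Mx \<ge> 0"
  defines "C2 \<equiv> 4 * b0\<^sup>2 + 4 * b0 * W + 4 * b0 * V + 2 * W * V + V\<^sup>2 + 4 * Mx * V + 2 * V\<^sup>2
               + W\<^sup>2 * \<bar>2 * e - 2\<bar> + W\<^sup>2 * \<bar>e * (e - 2)\<bar>"
  shows "nn * (4 * b0\<^sup>2 + 4 * b0 * (m * t + v) + ((m * t + v)\<^sup>2 + (4 * Q * v + nn * (2 * v\<^sup>2)))) / (K * (K - 2))
           - nn * t\<^sup>2 \<le> 4 * C2"
proof -
  have W0: "W \<ge> 0" using t by simp
  have V0: "V \<ge> 0" using v by simp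
  have K1: "K \<ge> nn / 2" using nn K m e by simp
  have K2: "K - 2 \<ge> nn / 2" using nn K m e by simp
  have KK: "K * (K - 2) \<ge> (nn / 2) * (nn / 2)" using K1 K2 nn by (intro mult_mono) auto
  have "(nn / 2) * (nn / 2) > 0" using nn by simp
  then have KKp: "K * (K - 2) > 0" using KK by linarith
  define R where "R = 4 * b0\<^sup>2 + 4 * b0 * (m * t + v) + ((m * t + v)\<^sup>2 + (4 * Q * v + nn * (2 * v\<^sup>2))) - t\<^sup>2 * (K * (K - 2))"
  have Req: "R = 4 * b0\<^sup>2 + 4 * b0 * (m * t) + 4 * b0 * v + 2 * (m * t) * v + v\<^sup>2 + 4 * (Q * v) + 2 * nn * v\<^sup>2
       - t\<^sup>2 * m * (2 * e - 2) - t\<^sup>2 * (e * (e - 2))"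
    unfolding R_def K by (simp add: power2_eq_square algebra_simps)
  have m0: "m \<ge> 0" "m \<le> nn" using m nn by auto
  have n1: "nn \<ge> 1" using nn by simp
  have mt: "m * t \<le> nn * W" using m0 t by (intro mult_mono) auto
  have mt0: "m * t \<ge> 0" using m0 t by simp
  have b1: "4 * b0\<^sup>2 \<le> nn * (4 * b0\<^sup>2)" using n1 by (simp add: mult_le_cancel_right1)
  have b2: "4 * b0 * (m * t) \<le> nn * (4 * b0 * W)"
    using mt b0 by (simp add: mult.left_commute)
  have b3: "4 * b0 * v \<le> nn * (4 * b0 * V)"
  proof -
    have "4 * b0 * v \<le> 4 * b0 * V" using v b0 by simp
    also have "\<dots> \<le> nn * (4 * b0 * V)"
    proof -
      have "0 \<le> 4 * b0 * V" using b0 V0 by simp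
      then have "1 * (4 * b0 * V) \<le> nn * (4 * b0 * V)" using n1 by (intro mult_right_mono)
      then show ?thesis by simp
    qed
    finally show ?thesis .
  qed
  have b4: "2 * (m * t) * v \<le> nn * (2 * W * V)"
  proof -
    have "0 \<le> nn * W" using W0 nn by simp
    then have "(m * t) * v \<le> (nn * W) * V" using mult_mono[OF mt v(2)] v(1) by simp
    then show ?thesis by (simp add: mult_ac)
  qed
  have b5: "v\<^sup>2 \<le> nn * V\<^sup>2"
  proof -
    have "v\<^sup>2 \<le> V\<^sup>2" using v by (intro power_mono) auto
    also have "\<dots> \<le> nn * V\<^sup>2" using n1 by (simp add: mult_le_cancel_right1)
    finally show ?thesis .
  qed
  have b6: "4 * (Q * v) \<le> nn * (4 * Mx * V)"
  proof -
    have "m * Mx \<le> nn * Mx" using m0 Mx by (intro mult_right_mono) auto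
    then have "Q * v \<le> (nn * Mx) * V" using Q v by (intro mult_mono) auto
    then show ?thesis by (simp add: mult_ac)
  qed
  have b7: "2 * nn * v\<^sup>2 \<le> nn * (2 * V\<^sup>2)"
  proof -
    have "v\<^sup>2 \<le> V\<^sup>2" using v by (intro power_mono) auto
    then show ?thesis using nn by simp
  qed
  have t2: "t\<^sup>2 \<le> W\<^sup>2" using t by (intro power_mono) auto
  have b8: "- (t\<^sup>2 * m * (2 * e - 2)) \<le> nn * (W\<^sup>2 * \<bar>2 * e - 2\<bar>)"
  proof -
    have P0: "0 \<le> t\<^sup>2 * m" using m0 by simp
    have "- (t\<^sup>2 * m * (2 * e - 2)) = (t\<^sup>2 * m) * (- (2 * e - 2))" by (rule minus_mult_right)
    also have "\<dots> \<le> (t\<^sup>2 * m) * \<bar>2 * e - 2\<bar>" using P0 by (intro mult_left_mono) auto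
    finally have "- (t\<^sup>2 * m * (2 * e - 2)) \<le> t\<^sup>2 * m * \<bar>2 * e - 2\<bar>" .
    also have "\<dots> \<le> W\<^sup>2 * nn * \<bar>2 * e - 2\<bar>"
    proof -
      have "t\<^sup>2 * m \<le> W\<^sup>2 * nn" using t2 m0 by (intro mult_mono) auto
      then show ?thesis by (intro mult_right_mono) auto
    qed
    finally show ?thesis by (simp add: mult_ac)
  qed
  have b9: "- (t\<^sup>2 * (e * (e - 2))) \<le> nn * (W\<^sup>2 * \<bar>e * (e - 2)\<bar>)"
  proof -
    have "- (t\<^sup>2 * (e * (e - 2))) \<le> t\<^sup>2 * \<bar>e * (e - 2)\<bar>"
      by (metis abs_ge_minus_self abs_mult abs_of_nonneg mult_left_mono mult_minus_right zero_le_power2)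
    also have "\<dots> \<le> W\<^sup>2 * \<bar>e * (e - 2)\<bar>" using t2 by (intro mult_right_mono) auto
    also have "\<dots> \<le> nn * (W\<^sup>2 * \<bar>e * (e - 2)\<bar>)"
    proof -
      have "0 \<le> W\<^sup>2 * \<bar>e * (e - 2)\<bar>" by simp
      then have "1 * (W\<^sup>2 * \<bar>e * (e - 2)\<bar>) \<le> nn * (W\<^sup>2 * \<bar>e * (e - 2)\<bar>)" using n1 by (intro mult_right_mono)
      then show ?thesis by simp
    qed
    finally show ?thesis .
  qed
  have RC: "R \<le> nn * C2"
    unfolding Req C2_def using b1 b2 b3 b4 b5 b6 b7 b8 b9 by (simp add: algebra_simps)
  have C2nn: "C2 \<ge> 0" unfolding C2_def using b0 W0 V0 Mx by (intro add_nonneg_nonneg mult_nonneg_nonneg; simp)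
  have "nn * (4 * b0\<^sup>2 + 4 * b0 * (m * t + v) + ((m * t + v)\<^sup>2 + (4 * Q * v + nn * (2 * v\<^sup>2)))) / (K * (K - 2))
           - nn * t\<^sup>2 = nn * R / (K * (K - 2))"
  proof -
    have gen: "\<And>X y D. D \<noteq> 0 \<Longrightarrow> nn * X / D - nn * y = nn * (X - y * D) / D"
      by (simp add: field_simps)
    have "K * (K - 2) \<noteq> 0" using KKp by linarith
    then show ?thesis unfolding R_def by (rule gen)
  qed
  also have "\<dots> \<le> nn * (nn * C2) / (K * (K - 2))"
    using RC KKp nn by (intro divide_right_mono mult_left_mono) auto
  also have "\<dots> \<le> 4 * C2"
  proof -
    have "nn * (nn * C2) = ((nn / 2) * (nn / 2)) * (4 * C2)" by (simp add: algebra_simps)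
    also have "\<dots> \<le> (K * (K - 2)) * (4 * C2)" using KK C2nn by (intro mult_right_mono) auto
    finally show ?thesis using KKp by (simp add: divide_le_eq mult.commute)
  qed
  finally show ?thesis .
qed



definition Kc_of :: "real \<Rightarrow> real \<Rightarrow> real \<Rightarrow> real \<Rightarrow> nat \<Rightarrow> real \<Rightarrow> real \<Rightarrow> real" where
  "Kc_of V a b0 A n \<Delta> c =
    (let u = A / (V + A); v = A * V / (V + A); \<alpha> = a + (real n - 1) / 2;
         SA = u\<^sup>2 * \<Delta>; ET = SA + real n * v; ET2 = ET\<^sup>2 + (4 * u\<^sup>2 * \<Delta> * v + real n * (2 * v\<^sup>2))
     in real n * c\<^sup>2 - 2 * real n * c * (b0 + (SA + (real n - 1) * v) / 2) / (\<alpha> - 1)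
           + real n * (b0\<^sup>2 + b0 * ET + ET2 / 4) / ((\<alpha> - 1) * (\<alpha> - 2)))"

definition C2_of :: "real \<Rightarrow> real \<Rightarrow> real \<Rightarrow> real \<Rightarrow> real \<Rightarrow> real" where
  "C2_of W b0 V Mx e = 4 * b0\<^sup>2 + 4 * b0 * W + 4 * b0 * V + 2 * W * V + V\<^sup>2 + 4 * Mx * V + 2 * V\<^sup>2
               + W\<^sup>2 * \<bar>2 * e - 2\<bar> + W\<^sup>2 * \<bar>e * (e - 2)\<bar>"

definition Bc :: "real \<Rightarrow> real \<Rightarrow> real \<Rightarrow> real \<Rightarrow> real" where
  "Bc V a b0 Mx = 2 * V + 4 * (Mx + V) * (\<bar>2 * a - 2\<bar> * (Mx + V) + 2 * b0)
      + 4 * C2_of (Mx + V) b0 V Mx (2 * a - 2)"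

lemma final_alg:
  fixes n :: nat and V a b0 A Mx \<Delta> thb Yb :: real
  assumes V: "V > 0" and a: "a > 0" and b0: "b0 > 0" and A: "A > 0" and n: "n \<ge> 10"
    and \<Delta>: "\<Delta> \<ge> 0" and DM: "\<Delta> / (real n - 1) \<le> Mx"
  shows "A * V / (V + A) + (V / (V + A))\<^sup>2 * A + (V / (V + A))\<^sup>2 * (real n * (thb - Yb)\<^sup>2)
     + max (Kc_of V a b0 A n \<Delta> (\<Delta> / (real n - 1) - V)) 0
    \<le> ((V\<^sup>2 + 2 * V * A) / (V\<^sup>2 + 2 * V * A + A\<^sup>2))\<^sup>2 *
        (real n * (thb - Yb)\<^sup>2 + real n * ((\<Delta> / (real n - 1) - V) - A)\<^sup>2) + Bc V a b0 Mx"
proof -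
  define nn where "nn = real n"
  have nn: "nn \<ge> 10" unfolding nn_def using n by simp
  define m where "m = nn - 1"
  have mpos: "m > 0" unfolding m_def using nn by simp
  define D where "D = \<Delta> / m"
  have D0: "D \<ge> 0" unfolding D_def using \<Delta> mpos by simp
  have DMx: "D \<le> Mx" unfolding D_def m_def nn_def using DM by simp
  have Mx: "Mx \<ge> 0" using D0 DMx by simp
  have \<Delta>eq: "\<Delta> = m * D" unfolding D_def using mpos by simp
  define W where "W = Mx + V"
  define e where "e = 2 * a - 2"
  have e: "e > -2" unfolding e_def using a by simp
  define K where "K = m + e"
  have VA: "V + A > 0" using V A by simp
  define u where "u = A / (V + A)"
  have u: "0 < u" "u < 1" unfolding u_def using V A by auto
  define r where "r = V / (V + A)"
  define v where "v = A * V / (V + A)"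
  have vu: "v = u * V" unfolding v_def u_def by simp
  have v: "0 \<le> v" "v \<le> V" unfolding vu using u V by auto
  define t where "t = u\<^sup>2 * D + u * V"
  have u2: "u\<^sup>2 \<le> 1" "u\<^sup>2 \<ge> 0" using u by (auto simp: power_le_one)
  have t0: "0 \<le> t" unfolding t_def using u D0 V by simp
  have tW: "t \<le> W"
  proof -
    have "u\<^sup>2 * D \<le> 1 * D" using u2 D0 by (intro mult_right_mono) auto
    moreover have "u * V \<le> 1 * V" using u V by (intro mult_right_mono) auto
    ultimately show ?thesis unfolding t_def W_def using DMx by simp
  qed
  define c where "c = D - V"
  have cW: "\<bar>c\<bar> \<le> W" unfolding c_def W_def using D0 DMx V by simp
  define Q where "Q = u\<^sup>2 * \<Delta>"
  have Q: "0 \<le> Q" "Q \<le> m * Mx"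
  proof -
    show "0 \<le> Q" unfolding Q_def using \<Delta> by simp
    have "u\<^sup>2 * \<Delta> \<le> 1 * \<Delta>" using u2 \<Delta> by (intro mult_right_mono) auto
    also have "\<Delta> \<le> m * Mx" unfolding \<Delta>eq using DMx mpos by simp
    finally show "Q \<le> m * Mx" unfolding Q_def by simp
  qed
  have c_eq: "\<Delta> / (real n - 1) - V = c" unfolding c_def D_def m_def nn_def ..
  have Kc_eq: "Kc_of V a b0 A n \<Delta> (\<Delta> / (real n - 1) - V) =
      nn * c\<^sup>2 - 2 * nn * c * (2 * b0 + m * t) / K
      + nn * (4 * b0\<^sup>2 + 4 * b0 * (m * t + v) + ((m * t + v)\<^sup>2 + (4 * Q * v + nn * (2 * v\<^sup>2)))) / (K * (K - 2))"
  proof -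
    have h1: "Q + (real n - 1) * v = m * t"
      unfolding Q_def t_def \<Delta>eq vu m_def nn_def by (simp add: algebra_simps power2_eq_square)
    have h2: "Q + real n * v = m * t + v"
    proof -
      have "Q + real n * v = (Q + (real n - 1) * v) + v" by (simp add: left_diff_distrib)
      then show ?thesis unfolding h1 .
    qed
    have h3: "a + (real n - 1) / 2 - 1 = K / 2" unfolding K_def m_def e_def nn_def by (simp add: field_simps)
    have h4: "(a + (real n - 1) / 2 - 1) * (a + (real n - 1) / 2 - 2) = K * (K - 2) / 4"
      unfolding K_def m_def e_def nn_def by (simp add: field_simps)
    have "Kc_of V a b0 A n \<Delta> (\<Delta> / (real n - 1) - V) =
        nn * c\<^sup>2 - 2 * nn * c * (b0 + (m * t) / 2) / (K / 2)
           + nn * (b0\<^sup>2 + b0 * (m * t + v) + ((m * t + v)\<^sup>2 + (4 * Q * v + nn * (2 * v\<^sup>2))) / 4) / (K * (K - 2) / 4)"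
      unfolding Kc_of_def Let_def c_eq u_def[symmetric] v_def[symmetric] Q_def[symmetric]
      unfolding h1 h2 h4 unfolding h3 nn_def
      by (simp add: Q_def mult.assoc)
    also have "\<dots> = nn * c\<^sup>2 - 2 * nn * c * (2 * b0 + m * t) / K
      + nn * (4 * b0\<^sup>2 + 4 * b0 * (m * t + v) + ((m * t + v)\<^sup>2 + (4 * Q * v + nn * (2 * v\<^sup>2)))) / (K * (K - 2))"
    proof -
      have Kp: "K > 2" unfolding K_def m_def e_def using nn a by simp
      have e1: "2 * nn * c * (b0 + (m * t) / 2) / (K / 2) = 2 * nn * c * (2 * b0 + m * t) / K"
        using Kp by (simp add: field_simps)
      have e2: "nn * (b0\<^sup>2 + b0 * (m * t + v) + ((m * t + v)\<^sup>2 + (4 * Q * v + nn * (2 * v\<^sup>2))) / 4) / (K * (K - 2) / 4)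
         = nn * (4 * b0\<^sup>2 + 4 * b0 * (m * t + v) + ((m * t + v)\<^sup>2 + (4 * Q * v + nn * (2 * v\<^sup>2)))) / (K * (K - 2))"
      proof -
        have "K * (K - 2) \<noteq> 0" using Kp by simp
        then show ?thesis by (simp add: field_simps)
      qed
      show ?thesis unfolding e1 e2 ..
    qed
    finally show ?thesis .
  qed
  have p1: "2 * nn * c * t - 2 * nn * c * (2 * b0 + m * t) / K \<le> 4 * W * (\<bar>e\<bar> * W + 2 * b0)"
    by (rule core_p1[OF nn K_def m_def e t0 tW cW b0])
  have p2: "nn * (4 * b0\<^sup>2 + 4 * b0 * (m * t + v) + ((m * t + v)\<^sup>2 + (4 * Q * v + nn * (2 * v\<^sup>2)))) / (K * (K - 2))
           - nn * t\<^sup>2 \<le> 4 * C2_of W b0 V Mx e"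
    unfolding C2_of_def by (rule core_p2[OF nn K_def m_def e t0 tW b0 v Q Mx])
  have Kc_le: "Kc_of V a b0 A n \<Delta> (\<Delta> / (real n - 1) - V) \<le> nn * (c - t)\<^sup>2 + (4 * W * (\<bar>e\<bar> * W + 2 * b0) + 4 * C2_of W b0 V Mx e)"
  proof -
    have "nn * c\<^sup>2 = nn * (c - t)\<^sup>2 + 2 * nn * c * t - nn * t\<^sup>2" by (simp add: power2_eq_square algebra_simps)
    then show ?thesis unfolding Kc_eq using p1 p2 by linarith
  qed
  have W0: "W \<ge> 0" unfolding W_def using Mx V by simp
  have C1nn: "4 * W * (\<bar>e\<bar> * W + 2 * b0) \<ge> 0" using W0 b0 by simp
  have C2nn: "C2_of W b0 V Mx e \<ge> 0" unfolding C2_of_def using b0 W0 V Mx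
    by (intro add_nonneg_nonneg mult_nonneg_nonneg; simp)
  have max_le: "max (Kc_of V a b0 A n \<Delta> (\<Delta> / (real n - 1) - V)) 0 \<le> nn * (c - t)\<^sup>2 + (4 * W * (\<bar>e\<bar> * W + 2 * b0) + 4 * C2_of W b0 V Mx e)"
    using Kc_le C1nn C2nn nn by (auto intro!: add_nonneg_nonneg)
  define q where "q = (V\<^sup>2 + 2 * V * A) / (V\<^sup>2 + 2 * V * A + A\<^sup>2)"
  have sq: "V\<^sup>2 + 2 * V * A + A\<^sup>2 = (V + A)\<^sup>2" by (simp add: power2_eq_square algebra_simps)
  have uA: "u * (V + A) = A" unfolding u_def using VA by simp
  have r_u: "r = 1 - u" unfolding r_def u_def using VA by (simp add: field_simps)
  have q_u: "q = 1 - u\<^sup>2"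
  proof -
    have S0: "(V + A)\<^sup>2 \<noteq> 0" using VA by simp
    have "V\<^sup>2 + 2 * V * A = (V + A)\<^sup>2 - A\<^sup>2" by (simp add: power2_eq_square algebra_simps)
    then have "q = ((V + A)\<^sup>2 - A\<^sup>2) / (V + A)\<^sup>2" unfolding q_def sq by simp
    also have "\<dots> = 1 - A\<^sup>2 / (V + A)\<^sup>2" using S0 by (simp add: diff_divide_distrib)
    also have "\<dots> = 1 - u\<^sup>2" unfolding u_def by (simp add: power_divide)
    finally show ?thesis .
  qed
  have q_eq: "q * (c - A) = c - t"
  proof -
    have "(1 - u\<^sup>2) * (D - V - A) = D - V - u\<^sup>2 * D - u * V + (u * (V + A) - A) * (1 + u)"
      by (simp add: algebra_simps power2_eq_square)
    then show ?thesis unfolding q_u c_def t_def uA by simp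
  qed
  have r0: "r \<ge> 0" unfolding r_def using V A by simp
  have rq: "r \<le> q"
  proof -
    have "u\<^sup>2 \<le> u" using u by (simp add: power2_eq_square mult_le_cancel_right1)
    then show ?thesis unfolding r_u q_u by simp
  qed
  have r2q: "r\<^sup>2 \<le> q\<^sup>2" using r0 rq by (intro power_mono) auto
  have rA: "r\<^sup>2 * A \<le> V"
  proof -
    have rv: "r * A = v" unfolding r_def v_def by simp
    have r1: "r \<le> 1" unfolding r_u using u by simp
    have "r\<^sup>2 * A = r * v" unfolding rv[symmetric] by (simp add: power2_eq_square)
    also have "\<dots> \<le> 1 * V" using r1 v by (intro mult_mono) auto
    finally show ?thesis by simp
  qed
  define X where "X = nn * (thb - Yb)\<^sup>2"
  have X0: "X \<ge> 0" unfolding X_def using nn by simp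
  have rX: "r\<^sup>2 * X \<le> q\<^sup>2 * X" using r2q X0 by (intro mult_right_mono) auto
  have qA: "q\<^sup>2 * (nn * ((\<Delta> / (real n - 1) - V) - A)\<^sup>2) = nn * (c - t)\<^sup>2"
    unfolding c_eq q_eq[symmetric] by (simp add: power_mult_distrib)
  have "A * V / (V + A) + (V / (V + A))\<^sup>2 * A + (V / (V + A))\<^sup>2 * (real n * (thb - Yb)\<^sup>2)
     + max (Kc_of V a b0 A n \<Delta> (\<Delta> / (real n - 1) - V)) 0
     = v + r\<^sup>2 * A + r\<^sup>2 * X + max (Kc_of V a b0 A n \<Delta> (\<Delta> / (real n - 1) - V)) 0"
    unfolding v_def r_def X_def nn_def ..
  also have "\<dots> \<le> V + V + q\<^sup>2 * X + (nn * (c - t)\<^sup>2 + (4 * W * (\<bar>e\<bar> * W + 2 * b0) + 4 * C2_of W b0 V Mx e))"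
    using v rA rX max_le by linarith
  also have "\<dots> = q\<^sup>2 * (X + nn * ((\<Delta> / (real n - 1) - V) - A)\<^sup>2) + Bc V a b0 Mx"
    unfolding Bc_def distrib_left qA W_def[symmetric] e_def[symmetric] by simp
  finally show ?thesis unfolding q_def X_def nn_def .
qed

lemma sum_mm_facts:
  fixes Y :: "nat \<Rightarrow> nat \<Rightarrow> real" and n :: nat and V A \<mu>' :: real
  assumes n: "n > 0" and VA: "V + A > 0"
  defines "mm \<equiv> (\<lambda>i. (\<mu>' * V + Y n i * A) / (V + A))"
  defines "mb \<equiv> (\<Sum>i<n. mm i) / real n"
  shows "mb - Ybar Y n = V / (V + A) * (\<mu>' - Ybar Y n)"
    "(\<Sum>i<n. (mm i - mb)\<^sup>2) = (A / (V + A))\<^sup>2 * Delta Y n"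
    "(\<Sum>i<n. 4 * (mm i - mb)\<^sup>2 * v + 2 * v\<^sup>2) = 4 * (A / (V + A))\<^sup>2 * Delta Y n * v + real n * (2 * v\<^sup>2)"
proof -
  have nr: "real n > 0" using n by simp
  have s: "(\<Sum>i<n. mm i) = (real n * \<mu>' * V + (\<Sum>i<n. Y n i) * A) / (V + A)"
    unfolding mm_def by (simp add: sum_divide_distrib[symmetric] sum.distrib sum_distrib_right)
  have mbv: "mb = (\<mu>' * V + Ybar Y n * A) / (V + A)"
    unfolding mb_def s Ybar_def using nr VA by (simp add: field_simps)
  show "mb - Ybar Y n = V / (V + A) * (\<mu>' - Ybar Y n)"
    unfolding mbv using VA by (simp add: field_simps)
  have d: "mm i - mb = A / (V + A) * (Y n i - Ybar Y n)" for i
  proof -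
    have "mm i - mb = ((\<mu>' * V + Y n i * A) - (\<mu>' * V + Ybar Y n * A)) / (V + A)"
      unfolding mbv mm_def by (rule diff_divide_distrib[symmetric])
    also have "\<dots> = (A * (Y n i - Ybar Y n)) / (V + A)" by (simp add: algebra_simps)
    finally show ?thesis by simp
  qed
  show s2: "(\<Sum>i<n. (mm i - mb)\<^sup>2) = (A / (V + A))\<^sup>2 * Delta Y n"
    unfolding d Delta_def power_mult_distrib sum_distrib_left ..
  have "(\<Sum>i<n. 4 * (mm i - mb)\<^sup>2 * v + 2 * v\<^sup>2) = 4 * v * (\<Sum>i<n. (mm i - mb)\<^sup>2) + real n * (2 * v\<^sup>2)"
    by (simp add: sum.distrib sum_distrib_left mult_ac)
  then show "(\<Sum>i<n. 4 * (mm i - mb)\<^sup>2 * v + 2 * v\<^sup>2) = 4 * (A / (V + A))\<^sup>2 * Delta Y n * v + real n * (2 * v\<^sup>2)"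
    unfolding s2 by (simp add: mult_ac)
qed

theorem mainTheorem2:
  fixes Y :: "nat \<Rightarrow> nat \<Rightarrow> real" and V a b0 :: real
  assumes hV: "V > 0" and ha: "a > 0" and hb0: "b0 > 0"
    and hA: "\<exists>\<delta> M N0. \<delta> > 0 \<and>
               (\<forall>n\<ge>2. Delta Y n / (real n - 1) \<le> M) \<and>
               (\<forall>n\<ge>max 2 N0. Delta Y n / (real n - 1) \<ge> V + \<delta>)"
  shows "\<exists>B N. \<forall>n\<ge>N. \<forall>A \<mu> \<theta>. A > 0 \<longrightarrow>
           gibbs_expect Y V a b0 n (\<lambda>A' \<mu>' \<theta>'. drift_f Y V n A' \<theta>') A \<mu> \<theta>
           \<le> ennreal (((V\<^sup>2 + 2 * V * A) / (V\<^sup>2 + 2 * V * A + A\<^sup>2))\<^sup>2 * drift_f Y V n A \<theta> + B)"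
proof -
  obtain Mx where hM: "\<And>n. n \<ge> 2 \<Longrightarrow> Delta Y n / (real n - 1) \<le> Mx"
    using hA by blast
  have DNN: "Delta Y n \<ge> 0" for n unfolding Delta_def by (simp add: sum_nonneg)
  show ?thesis
  proof (intro exI[of _ "Bc V a b0 Mx"] exI[of _ "10::nat"] allI impI)
    fix n :: nat and A \<mu> :: real and \<theta> :: "nat \<Rightarrow> real"
    assume n: "n \<ge> 10" and A: "A > 0"
    have n0: "n > 0" using n by simp
    have nr: "real n \<ge> 10" using n by simp
    have VA: "V + A > 0" using hV A by simp
    define v where "v = A * V / (V + A)"
    have v: "v > 0" unfolding v_def using hV A by simp
    define \<alpha> where "\<alpha> = a + (real n - 1) / 2"
    have "(real n - 1) / 2 \<ge> 9 / 2" using nr by simp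
    then have \<alpha>: "\<alpha> > 2" unfolding \<alpha>_def using ha by linarith
    define c where "c = Delta Y n / (real n - 1) - V"
    define Yb where "Yb = Ybar Y n"
    define r where "r = V / (V + A)"
    define Kc where "Kc = Kc_of V a b0 A n (Delta Y n) c"
    define thb where "thb = theta_bar n \<theta>"
    have step1: "(\<integral>\<^sup>+\<theta>'. (\<integral>\<^sup>+A'. ennreal (drift_f Y V n A' \<theta>')
            \<partial>inv_gamma_M (a + (real n - 1) / 2) (b0 + (1/2) * (\<Sum>i<n. (\<theta>' i - theta_bar n \<theta>')\<^sup>2)))
          \<partial>PiM {..<n} (\<lambda>i. normal_M ((\<mu>' * V + Y n i * A) / (V + A)) (A * V / (V + A))))
        \<le> ennreal (v + real n * r\<^sup>2 * (\<mu>' - Yb)\<^sup>2 + max Kc 0)" for \<mu>'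
    proof -
      define mm where "mm = (\<lambda>i. (\<mu>' * V + Y n i * A) / (V + A))"
      define mb where "mb = (\<Sum>i<n. mm i) / real n"
      have sf: "mb - Ybar Y n = V / (V + A) * (\<mu>' - Ybar Y n)"
        "(\<Sum>i<n. (mm i - mb)\<^sup>2) = (A / (V + A))\<^sup>2 * Delta Y n"
        "(\<Sum>i<n. 4 * (mm i - mb)\<^sup>2 * v + 2 * v\<^sup>2) = 4 * (A / (V + A))\<^sup>2 * Delta Y n * v + real n * (2 * v\<^sup>2)"
        unfolding mm_def mb_def by (rule sum_mm_facts[OF n0 VA])+
      have "(\<integral>\<^sup>+\<theta>'. (\<integral>\<^sup>+A'. ennreal (drift_f Y V n A' \<theta>')
            \<partial>inv_gamma_M (a + (real n - 1) / 2) (b0 + (1/2) * (\<Sum>i<n. (\<theta>' i - theta_bar n \<theta>')\<^sup>2)))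
          \<partial>PiM {..<n} (\<lambda>i. normal_M ((\<mu>' * V + Y n i * A) / (V + A)) (A * V / (V + A))))
        = (\<integral>\<^sup>+\<theta>'. (\<integral>\<^sup>+A'. ennreal (real n * (theta_bar n \<theta>' - Yb)\<^sup>2 + real n * (c - A')\<^sup>2)
            \<partial>inv_gamma_M \<alpha> (b0 + 1/2 * (\<Sum>i<n. (\<theta>' i - theta_bar n \<theta>')\<^sup>2)))
          \<partial>PiM {..<n} (\<lambda>i. normal_M (mm i) v))"
        unfolding drift_f_def mm_def v_def \<alpha>_def c_def Yb_def by simp
      also have "\<dots> \<le> ennreal (v + real n * (mb - Yb)\<^sup>2 + real n * c\<^sup>2
           - 2 * real n * c * (b0 + ((\<Sum>i<n. (mm i - mb)\<^sup>2) + (real n - 1) * v) / 2) / (\<alpha> - 1)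
           + real n * (b0\<^sup>2 + b0 * ((\<Sum>i<n. (mm i - mb)\<^sup>2) + real n * v)
              + (((\<Sum>i<n. (mm i - mb)\<^sup>2) + real n * v)\<^sup>2 + (\<Sum>i<n. 4 * (mm i - mb)\<^sup>2 * v + 2 * v\<^sup>2)) / 4) / ((\<alpha> - 1) * (\<alpha> - 2)))"
        unfolding mb_def by (rule middle[OF v n0 \<alpha> hb0])
      also have "\<dots> = ennreal (v + real n * r\<^sup>2 * (\<mu>' - Yb)\<^sup>2 + Kc)"
      proof (rule arg_cong[where f=ennreal])
        have sf1: "mb - Yb = r * (\<mu>' - Yb)" using sf(1) by (simp add: Yb_def r_def)
        show "v + real n * (mb - Yb)\<^sup>2 + real n * c\<^sup>2
           - 2 * real n * c * (b0 + ((\<Sum>i<n. (mm i - mb)\<^sup>2) + (real n - 1) * v) / 2) / (\<alpha> - 1)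
           + real n * (b0\<^sup>2 + b0 * ((\<Sum>i<n. (mm i - mb)\<^sup>2) + real n * v)
              + (((\<Sum>i<n. (mm i - mb)\<^sup>2) + real n * v)\<^sup>2 + (\<Sum>i<n. 4 * (mm i - mb)\<^sup>2 * v + 2 * v\<^sup>2)) / 4) / ((\<alpha> - 1) * (\<alpha> - 2))
          = v + real n * r\<^sup>2 * (\<mu>' - Yb)\<^sup>2 + Kc"
          unfolding sf1 sf(2) sf(3) Kc_def Kc_of_def Let_def
          unfolding \<alpha>_def[symmetric] v_def[symmetric]
          by (simp add: power_mult_distrib)
      qed
      also have "\<dots> \<le> ennreal (v + real n * r\<^sup>2 * (\<mu>' - Yb)\<^sup>2 + max Kc 0)"
        by (intro ennreal_leI) simp
      finally show ?thesis .
    qed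
    have "gibbs_expect Y V a b0 n (\<lambda>A' \<mu>' \<theta>'. drift_f Y V n A' \<theta>') A \<mu> \<theta>
        \<le> (\<integral>\<^sup>+\<mu>'. ennreal (v + real n * r\<^sup>2 * (\<mu>' - Yb)\<^sup>2 + max Kc 0) \<partial>normal_M thb (A / real n))"
      unfolding gibbs_expect_def thb_def by (intro nn_integral_mono step1)
    also have "\<dots> = ennreal (v + max Kc 0 + real n * r\<^sup>2 * (thb - Yb)\<^sup>2 + real n * r\<^sup>2 * (A / real n))"
    proof -
      have An: "A / real n > 0" using A n0 by simp
      have e: "v + real n * r\<^sup>2 * (x - Yb)\<^sup>2 + max Kc 0 = (v + max Kc 0 + real n * r\<^sup>2 * (thb - Yb)\<^sup>2)
          + (2 * real n * r\<^sup>2 * (thb - Yb)) * (x - thb) + (real n * r\<^sup>2) * (x - thb)^2 + 0 * (x - thb)^3 + 0 * (x - thb)^4" for x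
        by (simp add: power2_eq_square algebra_simps)
      note h = nM_hb[OF An, where f="\<lambda>x. v + real n * r\<^sup>2 * (x - Yb)\<^sup>2 + max Kc 0", OF e]
      have "(\<integral>\<^sup>+\<mu>'. ennreal (v + real n * r\<^sup>2 * (\<mu>' - Yb)\<^sup>2 + max Kc 0) \<partial>normal_M thb (A / real n))
          = ennreal (integral\<^sup>L (normal_M thb (A / real n)) (\<lambda>x. v + real n * r\<^sup>2 * (x - Yb)\<^sup>2 + max Kc 0))"
        using h(1) v by (intro nn_integral_eq_integral) (auto intro!: AE_I2 add_nonneg_nonneg)
      then show ?thesis unfolding h(2) by simp
    qed
    also have "\<dots> \<le> ennreal (((V\<^sup>2 + 2 * V * A) / (V\<^sup>2 + 2 * V * A + A\<^sup>2))\<^sup>2 * drift_f Y V n A \<theta> + Bc V a b0 Mx)"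
    proof (rule ennreal_leI)
      have "v + max Kc 0 + real n * r\<^sup>2 * (thb - Yb)\<^sup>2 + real n * r\<^sup>2 * (A / real n)
          = A * V / (V + A) + (V / (V + A))\<^sup>2 * A + (V / (V + A))\<^sup>2 * (real n * (thb - Yb)\<^sup>2)
            + max (Kc_of V a b0 A n (Delta Y n) (Delta Y n / (real n - 1) - V)) 0"
        unfolding v_def r_def Kc_def c_def using n0 by simp
      also have "\<dots> \<le> ((V\<^sup>2 + 2 * V * A) / (V\<^sup>2 + 2 * V * A + A\<^sup>2))\<^sup>2 *
        (real n * (thb - Yb)\<^sup>2 + real n * ((Delta Y n / (real n - 1) - V) - A)\<^sup>2) + Bc V a b0 Mx"
        using hM[of n] n by (intro final_alg[OF hV ha hb0 A n DNN]) auto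
      finally show "v + max Kc 0 + real n * r\<^sup>2 * (thb - Yb)\<^sup>2 + real n * r\<^sup>2 * (A / real n)
        \<le> ((V\<^sup>2 + 2 * V * A) / (V\<^sup>2 + 2 * V * A + A\<^sup>2))\<^sup>2 * drift_f Y V n A \<theta> + Bc V a b0 Mx"
        unfolding drift_f_def thb_def Yb_def .
    qed
    finally show "gibbs_expect Y V a b0 n (\<lambda>A' \<mu>' \<theta>'. drift_f Y V n A' \<theta>') A \<mu> \<theta>
           \<le> ennreal (((V\<^sup>2 + 2 * V * A) / (V\<^sup>2 + 2 * V * A + A\<^sup>2))\<^sup>2 * drift_f Y V n A \<theta> + Bc V a b0 Mx)" .
  qed
qed


end
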